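(* Let $A$ be a finite set of $m$ alternatives and $N=\{1,\dots,n\}$ a set of agents, and let preferences range over all weak orders (complete and transitive binary relations) on $A$. If $m\ge 4$ and $n\ge 4$, then there is no social decision scheme $f\colon \mathcal{R}^N\to\Delta(A)$ that is simultaneously anonymous, neutral, efficient, and strategyproof.
   Context: $\mathcal{R}$ denotes the set of all complete and transitive binary relations (weak preferences) on $A$; a preference profile is $R=(\succsim_1,\dots,\succsim_n)\in\mathcal{R}^N$. $\Delta(A)=\{p\in\mathbb{R}_{\ge0}^A:\sum_{x\in A}p(x)=1\}$ is the set of lotteries. A social decision scheme (SDS) is a function $f\colon\mathcal{R}^N\to\Delta(A)$. For $R\in\mathcal{R}^N$, $i\in N$ and $\succsim\in\mathcal{R}$, $R_{i:\succsim}$ denotes the profile obtained from $R$ by replacing $\succsim_i$ with $\succsim$. Anonymity: $f(R)=f(R\circ\sigma)$ for all $R$ and all permutations $\sigma$ of $N$. Neutrality: $f(R)(x)=f(\pi(R))(\pi(x))$ for all $R$, all permutations $\pi$ of $A$ and all $x\in A$, where $\pi(R)$ replaces each $\succsim_i$ by $\succsim_i^\pi$ defined by $\pi(x)\succsim_i^\pi\pi(y)$ iff $x\succsim_i y$. A utility function $u_i\colon A\to\mathbb{R}$ is consistent with $\succsim_i$ if $u_i(x)\ge u_i(y)\iff x\succsim_i y$; it is extended to lotteries by $u_i(p)=\sum_{x}p(x)u_i(x)$. A utility representation $u$ assigns to each profile $R$ a tuple $(u^R_1,\dots,u^R_n)$ of utility functions with $u^R_i$ consistent with $\succsim_i$.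 For a representation $u$ and profile $R$, lottery $p$ $u$-dominates $q$ at $R$ if $u^R_i(p)\ge u^R_i(q)$ for all $i$ and $u^R_i(p)>u^R_i(q)$ for some $i$. $f$ is efficient if there is no profile $R$ such that $f(R)$ is $u$-dominated at $R$ for all utility representations $u$ (i.e., it never returns a lottery that is $u$-dominated for every $u$). $f$ is manipulable if there exist a profile $R$, an agent $i$ and a preference relation $\succsim$ such that $u^R_i(f(R_{i:\succsim}))>u^R_i(f(R))$ for all utility representations $u$; $f$ is strategyproof if it is not manipulable. *)

theory Defs
  imports "HOL-Analysis.Analysis" "HOL-Combinatorics.Permutations"
begin

(* Alternatives: a finite carrier set A :: 'a set.
   Agents: N = {0..<n} (list positions); a preference profile is a list of
   length n of weak orders on A. *)

definition weak_order :: "'a set \<Rightarrow> 'a rel \<Rightarrow> bool" where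
  "weak_order A r \<longleftrightarrow> r \<subseteq> A \<times> A \<and>
     (\<forall>x\<in>A. \<forall>y\<in>A. (x, y) \<in> r \<or> (y, x) \<in> r) \<and> trans r"

definition profile :: "'a set \<Rightarrow> nat \<Rightarrow> 'a rel list \<Rightarrow> bool" where
  "profile A n R \<longleftrightarrow> length R = n \<and> (\<forall>i<n. weak_order A (R ! i))"

definition lottery :: "'a set \<Rightarrow> ('a \<Rightarrow> real) \<Rightarrow> bool" where
  "lottery A p \<longleftrightarrow> (\<forall>x. p x \<ge> 0) \<and> (\<forall>x. x \<notin> A \<longrightarrow> p x = 0) \<and> (\<Sum>x\<in>A. p x) = 1"

definition SDS :: "'a set \<Rightarrow> nat \<Rightarrow> ('a rel list \<Rightarrow> ('a \<Rightarrow> real)) \<Rightarrow> bool" where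
  "SDS A n f \<longleftrightarrow> (\<forall>R. profile A n R \<longrightarrow> lottery A (f R))"

definition anonymous :: "'a set \<Rightarrow> nat \<Rightarrow> ('a rel list \<Rightarrow> ('a \<Rightarrow> real)) \<Rightarrow> bool" where
  "anonymous A n f \<longleftrightarrow> (\<forall>R \<sigma>. profile A n R \<longrightarrow> \<sigma> permutes {0..<n} \<longrightarrow>
      f R = f (map (\<lambda>i. R ! \<sigma> i) [0..<n]))"

definition perm_profile :: "('a \<Rightarrow> 'a) \<Rightarrow> 'a rel list \<Rightarrow> 'a rel list" where
  "perm_profile \<pi> R = map (\<lambda>r. map_prod \<pi> \<pi> ` r) R"

definition neutral :: "'a set \<Rightarrow> nat \<Rightarrow> ('a rel list \<Rightarrow> ('a \<Rightarrow> real)) \<Rightarrow> bool" where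
  "neutral A n f \<longleftrightarrow> (\<forall>R \<pi> x. profile A n R \<longrightarrow> \<pi> permutes A \<longrightarrow>
      f R x = f (perm_profile \<pi> R) (\<pi> x))"

definition consistent :: "'a set \<Rightarrow> ('a \<Rightarrow> real) \<Rightarrow> 'a rel \<Rightarrow> bool" where
  "consistent A u r \<longleftrightarrow> (\<forall>x\<in>A. \<forall>y\<in>A. u x \<ge> u y \<longleftrightarrow> (x, y) \<in> r)"

definition exp_util :: "'a set \<Rightarrow> ('a \<Rightarrow> real) \<Rightarrow> ('a \<Rightarrow> real) \<Rightarrow> real" where
  "exp_util A u p = (\<Sum>x\<in>A. p x * u x)"

definition utility_rep ::
  "'a set \<Rightarrow> nat \<Rightarrow> ('a rel list \<Rightarrow> nat \<Rightarrow> 'a \<Rightarrow> real) \<Rightarrow> bool" where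
  "utility_rep A n u \<longleftrightarrow> (\<forall>R i. profile A n R \<longrightarrow> i < n \<longrightarrow> consistent A (u R i) (R ! i))"

definition u_dominates ::
  "'a set \<Rightarrow> nat \<Rightarrow> ('a rel list \<Rightarrow> nat \<Rightarrow> 'a \<Rightarrow> real) \<Rightarrow> 'a rel list \<Rightarrow>
   ('a \<Rightarrow> real) \<Rightarrow> ('a \<Rightarrow> real) \<Rightarrow> bool" where
  "u_dominates A n u R p q \<longleftrightarrow>
     (\<forall>i<n. exp_util A (u R i) p \<ge> exp_util A (u R i) q) \<and>
     (\<exists>i<n. exp_util A (u R i) p > exp_util A (u R i) q)"

definition u_dominated ::
  "'a set \<Rightarrow> nat \<Rightarrow> ('a rel list \<Rightarrow> nat \<Rightarrow> 'a \<Rightarrow> real) \<Rightarrow> 'a rel list \<Rightarrow>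
   ('a \<Rightarrow> real) \<Rightarrow> bool" where
  "u_dominated A n u R q \<longleftrightarrow> (\<exists>p. lottery A p \<and> u_dominates A n u R p q)"

definition efficient :: "'a set \<Rightarrow> nat \<Rightarrow> ('a rel list \<Rightarrow> ('a \<Rightarrow> real)) \<Rightarrow> bool" where
  "efficient A n f \<longleftrightarrow> \<not> (\<exists>R. profile A n R \<and>
      (\<forall>u. utility_rep A n u \<longrightarrow> u_dominated A n u R (f R)))"

definition manipulable :: "'a set \<Rightarrow> nat \<Rightarrow> ('a rel list \<Rightarrow> ('a \<Rightarrow> real)) \<Rightarrow> bool" where
  "manipulable A n f \<longleftrightarrow> (\<exists>R i r. profile A n R \<and> i < n \<and> weak_order A r \<and>
      (\<forall>u. utility_rep A n u \<longrightarrow>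
         exp_util A (u R i) (f (R[i := r])) > exp_util A (u R i) (f R)))"

definition strategyproof :: "'a set \<Rightarrow> nat \<Rightarrow> ('a rel list \<Rightarrow> ('a \<Rightarrow> real)) \<Rightarrow> bool" where
  "strategyproof A n f \<longleftrightarrow> \<not> manipulable A n f"

end

theory Submission
  imports Defs
begin


lemma layer:
  fixes d u :: "'a \<Rightarrow> real"
  assumes "finite B" "\<forall>x\<in>B. u x \<ge> 0" "\<forall>x\<in>B. sum d {y\<in>B. u x \<le> u y} \<ge> 0"
  shows "(\<Sum>x\<in>B. d x * u x) \<ge> 0 \<and>
         ((\<exists>x\<in>B. u x > 0 \<and> sum d {y\<in>B. u x \<le> u y} > 0) \<longrightarrow> (\<Sum>x\<in>B. d x * u x) > 0)"
  using assms
proof (induction "card B" arbitrary: B u rule: less_induct)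
  case less
  show ?case
  proof (cases "B = {}")
    case True then show ?thesis by simp
  next
    case False
    define m where "m = Min (u ` B)"
    have fin: "finite (u ` B)" using less.prems(1) by simp
    have mB: "m \<in> u ` B" unfolding m_def using False fin by (intro Min_in) auto
    then obtain x0 where x0: "x0 \<in> B" "u x0 = m" by auto
    have mle: "\<And>y. y \<in> B \<Longrightarrow> m \<le> u y" unfolding m_def using fin by auto
    have m0: "m \<ge> 0" using x0 less.prems(2) by auto
    define B' where "B' = {y\<in>B. u y > m}"
    have B'sub: "B' \<subset> B" unfolding B'_def using x0 by auto
    have cardlt: "card B' < card B" using B'sub less.prems(1) by (simp add: psubset_card_mono)
    have finB': "finite B'" using B'sub less.prems(1) finite_subset by blast
    define u' where "u' = (\<lambda>y. u y - m)"
    have upeq: "\<And>x. x \<in> B' \<Longrightarrow> {y\<in>B'. u' x \<le> u' y} = {y\<in>B. u x \<le> u y}"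
      unfolding B'_def u'_def by auto
    have IH: "(\<Sum>x\<in>B'. d x * u' x) \<ge> 0 \<and>
         ((\<exists>x\<in>B'. u' x > 0 \<and> sum d {y\<in>B'. u' x \<le> u' y} > 0) \<longrightarrow> (\<Sum>x\<in>B'. d x * u' x) > 0)"
      apply (rule less.hyps[OF cardlt finB'])
      using upeq less.prems(3) unfolding B'_def u'_def by auto
    have allB: "{y\<in>B. u x0 \<le> u y} = B" using x0 mle by auto
    have sB: "sum d B \<ge> 0" using less.prems(3) x0 allB by metis
    have split: "(\<Sum>x\<in>B. d x * u x) = m * sum d B + (\<Sum>x\<in>B. d x * u' x)"
      unfolding u'_def by (simp add: sum_distrib_left algebra_simps sum.distrib sum_subtractf)
    have rest: "(\<Sum>x\<in>B. d x * u' x) = (\<Sum>x\<in>B'. d x * u' x)"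
    proof -
      have "(\<Sum>x\<in>B. d x * u' x) = (\<Sum>x\<in>B'. d x * u' x) + (\<Sum>x\<in>B-B'. d x * u' x)"
        using B'sub less.prems(1) by (metis add.commute psubset_imp_subset sum.subset_diff)
      moreover have "(\<Sum>x\<in>B-B'. d x * u' x) = 0"
        by (rule sum.neutral) (auto simp: B'_def u'_def dest: mle)
      ultimately show ?thesis by simp
    qed
    have ge: "(\<Sum>x\<in>B. d x * u x) \<ge> 0" using split rest IH sB m0 by simp
    moreover have "(\<Sum>x\<in>B. d x * u x) > 0" if "\<exists>x\<in>B. u x > 0 \<and> sum d {y\<in>B. u x \<le> u y} > 0"
    proof -
      from that obtain x where x: "x\<in>B" "u x > 0" "sum d {y\<in>B. u x \<le> u y} > 0" by auto
      show ?thesis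
      proof (cases "u x = m")
        case True
        then have "{y\<in>B. u x \<le> u y} = B" using mle by auto
        then have "sum d B > 0" using x by simp
        then have "m * sum d B > 0" using True x by simp
        then show ?thesis using split rest IH by simp
      next
        case False
        then have "x \<in> B'" using x mle unfolding B'_def by force
        moreover have "u' x > 0" using False x mle unfolding u'_def by force
        ultimately have "(\<Sum>x\<in>B'. d x * u' x) > 0" using IH upeq x by auto
        then show ?thesis using split rest sB m0 by (simp add: add_nonneg_pos)
      qed
    qed
    ultimately show ?thesis by blast
  qed
qed



lemma upper_eq:
  assumes "consistent A u r" "x \<in> A"
  shows "{y\<in>A. (y,x)\<in>r} = {y\<in>A. u x \<le> u y}"
  using assms unfolding consistent_def by auto

lemma sd_sum:
  fixes d u :: "'a \<Rightarrow> real"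
  assumes fin: "finite A" and cons: "consistent A u r" and s0: "sum d A = 0"
    and up: "\<forall>x\<in>A. sum d {y\<in>A. (y,x)\<in>r} \<ge> 0"
  shows "(\<Sum>x\<in>A. d x * u x) \<ge> 0 \<and>
         ((\<exists>x\<in>A. sum d {y\<in>A. (y,x)\<in>r} > 0) \<longrightarrow> (\<Sum>x\<in>A. d x * u x) > 0)"
proof (cases "A = {}")
  case True then show ?thesis by simp
next
  case False
  define m where "m = Min (u ` A)"
  have finu: "finite (u ` A)" using fin by simp
  have mle: "\<And>y. y \<in> A \<Longrightarrow> m \<le> u y" unfolding m_def using finu by auto
  define u' where "u' = (\<lambda>y. u y - m)"
  have eq: "(\<Sum>x\<in>A. d x * u x) = (\<Sum>x\<in>A. d x * u' x)"
  proof -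
    have "(\<Sum>x\<in>A. d x * u' x) = (\<Sum>x\<in>A. d x * u x) - m * sum d A"
      unfolding u'_def by (simp add: algebra_simps sum_subtractf sum_distrib_left)
    then show ?thesis using s0 by simp
  qed
  have ups: "\<And>x. x \<in> A \<Longrightarrow> {y\<in>A. (y,x)\<in>r} = {y\<in>A. u' x \<le> u' y}"
    using upper_eq[OF cons] unfolding u'_def by auto
  have L: "(\<Sum>x\<in>A. d x * u' x) \<ge> 0 \<and>
         ((\<exists>x\<in>A. u' x > 0 \<and> sum d {y\<in>A. u' x \<le> u' y} > 0) \<longrightarrow> (\<Sum>x\<in>A. d x * u' x) > 0)"
    apply (rule layer[OF fin])
    using mle up ups unfolding u'_def by auto
  have "(\<Sum>x\<in>A. d x * u x) > 0" if "\<exists>x\<in>A. sum d {y\<in>A. (y,x)\<in>r} > 0"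
  proof -
    from that obtain x where x: "x \<in> A" "sum d {y\<in>A. (y,x)\<in>r} > 0" by auto
    have "u' x > 0"
    proof (rule ccontr)
      assume "\<not> u' x > 0"
      then have "\<And>y. y \<in> A \<Longrightarrow> u' x \<le> u' y" using mle unfolding u'_def by force
      then have "{y\<in>A. u' x \<le> u' y} = A" by auto
      then show False using x ups s0 by simp
    qed
    then show ?thesis using L x ups eq by auto
  qed
  then show ?thesis using L eq by auto
qed

lemma exp_util_diff:
  "exp_util A u p - exp_util A u q = (\<Sum>x\<in>A. (p x - q x) * u x)"
  unfolding exp_util_def by (simp add: sum_subtractf algebra_simps)

definition of_rank :: "'a set \<Rightarrow> ('a \<Rightarrow> nat) \<Rightarrow> 'a rel" where
  "of_rank A v = {(x,y). x \<in> A \<and> y \<in> A \<and> v y \<le> v x}"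

lemma weak_order_of_rank: "weak_order A (of_rank A v)"
  unfolding weak_order_def of_rank_def trans_def by auto

lemma of_rank_const: "of_rank A (\<lambda>_. 0) = A \<times> A"
  unfolding of_rank_def by auto



lemma eff_delta:
  fixes \<delta> :: "'a \<Rightarrow> real"
  assumes fin: "finite A" and sds: "SDS A n f" and effi: "efficient A n f"
    and R: "profile A n R" and out: "\<forall>x. x \<notin> A \<longrightarrow> \<delta> x = 0" and s0: "sum \<delta> A = 0"
    and up: "\<forall>i<n. \<forall>x\<in>A. sum \<delta> {y\<in>A. (y,x) \<in> R!i} \<ge> 0"
    and strict: "\<exists>i<n. \<exists>x\<in>A. sum \<delta> {y\<in>A. (y,x) \<in> R!i} > 0"
    and supp: "\<forall>x\<in>A. \<delta> x < 0 \<longrightarrow> f R x > 0"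
  shows False
proof -
  define q where "q = f R"
  have lq: "lottery A q" using sds R unfolding SDS_def q_def by auto
  define S where "S = {x\<in>A. \<delta> x < 0}"
  define \<epsilon> where "\<epsilon> = Min (insert 1 ((\<lambda>x. q x / (- \<delta> x)) ` S))"
  have finS: "finite S" using fin unfolding S_def by auto
  have epos: "\<epsilon> > 0" unfolding \<epsilon>_def using finS supp
    by (subst Min_gr_iff) (auto simp: S_def q_def divide_pos_neg)
  have ele: "\<And>x. x \<in> S \<Longrightarrow> \<epsilon> \<le> q x / (- \<delta> x)" unfolding \<epsilon>_def using finS by auto
  define p where "p = (\<lambda>x. q x + \<epsilon> * \<delta> x)"
  have lp: "lottery A p"
    unfolding lottery_def
  proof (intro conjI allI impI)
    fix x
    show "p x \<ge> 0"
    proof (cases "x \<in> S")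
      case True
      then have "\<delta> x < 0" "x \<in> A" unfolding S_def by auto
      have "\<epsilon> \<le> q x / (- \<delta> x)" using ele True by auto
      then have "\<epsilon> * (- \<delta> x) \<le> q x" using \<open>\<delta> x < 0\<close> pos_le_divide_eq[of "- \<delta> x" \<epsilon> "q x"] by simp
      then show ?thesis unfolding p_def by simp
    next
      case False
      then have "x \<notin> A \<or> \<delta> x \<ge> 0" unfolding S_def by auto
      moreover have "q x \<ge> 0" using lq unfolding lottery_def by auto
      ultimately show ?thesis unfolding p_def using out epos by auto
    qed
  next
    fix x assume "x \<notin> A"
    then show "p x = 0" using lq out unfolding p_def lottery_def by auto
  next
    show "sum p A = 1" using lq s0 unfolding p_def lottery_def by (simp add: sum.distrib sum_distrib_left[symmetric])
  qed
  have "\<forall>u. utility_rep A n u \<longrightarrow> u_dominated A n u R (f R)"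
  proof (intro allI impI)
    fix u assume ur: "utility_rep A n u"
    have diff: "exp_util A (u R i) p - exp_util A (u R i) q = \<epsilon> * (\<Sum>x\<in>A. \<delta> x * u R i x)" for i
      unfolding exp_util_diff p_def by (simp add: sum_distrib_left algebra_simps)
    have key: "\<And>i. i < n \<Longrightarrow> (\<Sum>x\<in>A. \<delta> x * u R i x) \<ge> 0 \<and>
         ((\<exists>x\<in>A. sum \<delta> {y\<in>A. (y,x)\<in>R!i} > 0) \<longrightarrow> (\<Sum>x\<in>A. \<delta> x * u R i x) > 0)"
      by (rule sd_sum[OF fin _ s0]) (use ur R up in \<open>auto simp: utility_rep_def\<close>)
    show "u_dominated A n u R (f R)"
      unfolding u_dominated_def u_dominates_def
    proof (intro exI[of _ p] conjI lp allI impI)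
      fix i assume "i < n"
      then show "exp_util A (u R i) (f R) \<le> exp_util A (u R i) p"
        using key[of i] diff[of i] epos unfolding q_def by (simp add: algebra_simps)
    next
      from strict obtain i where i: "i < n" "\<exists>x\<in>A. sum \<delta> {y\<in>A. (y,x) \<in> R!i} > 0" by auto
      then have "(\<Sum>x\<in>A. \<delta> x * u R i x) > 0" using key by auto
      then have "exp_util A (u R i) p > exp_util A (u R i) (f R)"
        using diff[of i] epos unfolding q_def by (simp add: algebra_simps)
      then show "\<exists>i<n. exp_util A (u R i) (f R) < exp_util A (u R i) p" using i by auto
    qed
  qed
  then show False using effi R unfolding efficient_def by auto
qed

lemma manip:
  fixes R :: "'a rel list"
  assumes fin: "finite A" and sds: "SDS A n f" and spr: "strategyproof A n f"
    and R: "profile A n R" and i: "i < n" and r: "weak_order A r"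
    and R': "profile A n (R[i := r])"
    and up: "\<forall>x\<in>A. sum (\<lambda>y. f (R[i:=r]) y - f R y) {y\<in>A. (y,x) \<in> R!i} \<ge> 0"
    and strict: "\<exists>x\<in>A. sum (\<lambda>y. f (R[i:=r]) y - f R y) {y\<in>A. (y,x) \<in> R!i} > 0"
  shows False
proof -
  have l1: "lottery A (f R)" and l2: "lottery A (f (R[i:=r]))" using sds R R' unfolding SDS_def by auto
  have s0: "sum (\<lambda>y. f (R[i:=r]) y - f R y) A = 0" using l1 l2 unfolding lottery_def by (simp add: sum_subtractf)
  have "manipulable A n f"
    unfolding manipulable_def
  proof (intro exI conjI allI impI)
    show "profile A n R" "i < n" "weak_order A r" by fact+
    fix u assume ur: "utility_rep A n u"
    have "(\<Sum>x\<in>A. (f (R[i:=r]) x - f R x) * u R i x) > 0"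
      using sd_sum[OF fin _ s0 up] ur R i strict unfolding utility_rep_def by auto
    then show "exp_util A (u R i) (f R) < exp_util A (u R i) (f (R[i := r]))"
      using exp_util_diff[of A "u R i" "f (R[i:=r])" "f R"] by simp
  qed
  then show False using spr unfolding strategyproof_def by simp
qed



locale ctx =
  fixes A :: "'a set" and n :: nat and f :: "'a rel list \<Rightarrow> 'a \<Rightarrow> real" and a b c d :: 'a
  assumes fin: "finite A" and n4: "n \<ge> 4" and sds: "SDS A n f" and anon: "anonymous A n f"
    and neut: "neutral A n f" and effi: "efficient A n f" and spr: "strategyproof A n f"
    and inA: "a \<in> A" "b \<in> A" "c \<in> A" "d \<in> A"
    and dist: "a \<noteq> b" "a \<noteq> c" "a \<noteq> d" "b \<noteq> c" "b \<noteq> d" "c \<noteq> d"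
begin

lemmas dist' = dist dist[symmetric]

definition lift :: "('a \<Rightarrow> nat) list \<Rightarrow> 'a rel list" where
  "lift vs = map (of_rank A) vs @ replicate (n-4) (A \<times> A)"

definition valid :: "('a \<Rightarrow> nat) \<Rightarrow> bool" where
  "valid v \<longleftrightarrow> (\<forall>y. y \<notin> {a,b,c,d} \<longrightarrow> v y = 0) \<and> v a > 0 \<and> v b > 0 \<and> v c > 0 \<and> v d > 0"

definition U :: "('a \<Rightarrow> nat) \<Rightarrow> 'a \<Rightarrow> ('a \<Rightarrow> real) \<Rightarrow> real" where
  "U v x p = (\<Sum>y\<in>{a,b,c,d}. if v x \<le> v y then p y else 0)"

lemma length_lift: "length vs = 4 \<Longrightarrow> length (lift vs) = n"
  unfolding lift_def using n4 by simp

lemma nth_lift: "length vs = 4 \<Longrightarrow> i < n \<Longrightarrow> lift vs ! i = (if i < 4 then of_rank A (vs ! i) else A \<times> A)"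
  unfolding lift_def by (auto simp: nth_append)

lemma profile_lift: "length vs = 4 \<Longrightarrow> profile A n (lift vs)"
  unfolding profile_def using length_lift nth_lift weak_order_of_rank[of A] of_rank_const[of A]
  by (metis (no_types, lifting))

lemma lottery_lift: "length vs = 4 \<Longrightarrow> lottery A (f (lift vs))"
  using sds profile_lift unfolding SDS_def by auto

lemma sum_restrict:
  fixes p :: "'a \<Rightarrow> real"
  assumes "\<forall>y. y \<notin> {a,b,c,d} \<longrightarrow> p y = 0"
  shows "sum p {y\<in>A. v x \<le> v y} = U v x p"
proof -
  have "sum p {y\<in>A. v x \<le> v y} = (\<Sum>y\<in>A. if v x \<le> v y then p y else 0)"
    using fin by (simp add: sum.inter_filter)
  also have "\<dots> = (\<Sum>y\<in>{a,b,c,d}. if v x \<le> v y then p y else 0)"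
    using fin inA assms by (intro sum.mono_neutral_right) auto
  finally show ?thesis unfolding U_def .
qed

lemma U_all: "v x = 0 \<Longrightarrow> U v x p = p a + p b + p c + p d"
  unfolding U_def using dist' by simp

lemma lift_upd: "length vs = 4 \<Longrightarrow> j < 4 \<Longrightarrow> (lift vs)[j := of_rank A w] = lift (vs[j := w])"
  unfolding lift_def by (simp add: list_update_append map_update)

lemma pareto_zero:
  assumes len: "length vs = 4" and val: "\<forall>v\<in>set vs. valid v" and x: "x \<notin> {a,b,c,d}"
  shows "f (lift vs) x = 0"
proof (cases "x \<in> A")
  case False then show ?thesis using lottery_lift[OF len] unfolding lottery_def by auto
next
  case True
  show ?thesis
  proof (rule ccontr)
    assume nz: "f (lift vs) x \<noteq> 0"
    then have pos: "f (lift vs) x > 0" using lottery_lift[OF len] unfolding lottery_def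
      by (metis order_le_less)
    define \<delta> :: "'a \<Rightarrow> real" where "\<delta> = (\<lambda>y. if y = a then 1 else if y = x then -1 else 0)"
    have xa: "x \<noteq> a" using x by auto
    have s0: "sum \<delta> A = 0"
    proof -
      have "sum \<delta> A = sum \<delta> {a, x}"
        using fin True inA by (intro sum.mono_neutral_right) (auto simp: \<delta>_def)
      then show ?thesis using xa by (simp add: \<delta>_def)
    qed
    have vx: "\<forall>v\<in>set vs. v x = 0" using val x unfolding valid_def by auto
    have va: "\<forall>v\<in>set vs. v a > 0" using val unfolding valid_def by auto
    have upv: "sum \<delta> {y\<in>A. (y,z) \<in> lift vs ! i} \<ge> 0 \<and> (i < 4 \<and> z = a \<longrightarrow> sum \<delta> {y\<in>A. (y,z) \<in> lift vs ! i} > 0)"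
      if "i < n" "z \<in> A" for i z
    proof (cases "i < 4")
      case False
      then have "{y\<in>A. (y,z) \<in> lift vs ! i} = A" using nth_lift[OF len that(1)] that by auto
      then show ?thesis using s0 False by simp
    next
      case True
      define v where "v = vs ! i"
      have vin: "v \<in> set vs" unfolding v_def using True len by simp
      have "{y\<in>A. (y,z) \<in> lift vs ! i} = {y\<in>A. v z \<le> v y}"
        using nth_lift[OF len that(1)] True that(2) unfolding v_def of_rank_def by auto
      moreover have "sum \<delta> {y\<in>A. v z \<le> v y} =
           (if v z \<le> v a then 1 else 0) + (if v z \<le> v x then -1 else 0)"
      proof -
        have "sum \<delta> {y\<in>A. v z \<le> v y} = sum \<delta> ({y\<in>A. v z \<le> v y} \<inter> {a,x})"
          using fin by (intro sum.mono_neutral_right) (auto simp: \<delta>_def)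
        also have "{y\<in>A. v z \<le> v y} \<inter> {a,x} = (if v z \<le> v a then {a} else {}) \<union> (if v z \<le> v x then {x} else {})"
          using inA True \<open>x \<in> A\<close> by auto
        finally show ?thesis using xa by (auto simp: \<delta>_def)
      qed
      ultimately show ?thesis using vin vx va by auto
    qed
    show False
    proof (rule eff_delta[OF fin sds effi profile_lift[OF len]])
      show "\<forall>x. x \<notin> A \<longrightarrow> \<delta> x = 0" using inA True by (auto simp: \<delta>_def)
      show "sum \<delta> A = 0" by fact
      show "\<forall>i<n. \<forall>x\<in>A. 0 \<le> sum \<delta> {y \<in> A. (y, x) \<in> lift vs ! i}" using upv by blast
      show "\<exists>i<n. \<exists>x\<in>A. 0 < sum \<delta> {y \<in> A. (y, x) \<in> lift vs ! i}"
      proof (intro exI conjI bexI)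
        show "(0::nat) < n" using n4 by simp
        show "a \<in> A" using inA by simp
        show "0 < sum \<delta> {y \<in> A. (y, a) \<in> lift vs ! 0}" using upv[of 0 a] n4 inA by simp
      qed
      show "\<forall>x\<in>A. \<delta> x < 0 \<longrightarrow> 0 < f (lift vs) x" using pos xa by (auto simp: \<delta>_def)
    qed
  qed
qed

lemma lot4:
  assumes len: "length vs = 4" and val: "\<forall>v\<in>set vs. valid v"
  shows "f (lift vs) a \<ge> 0 \<and> f (lift vs) b \<ge> 0 \<and> f (lift vs) c \<ge> 0 \<and> f (lift vs) d \<ge> 0 \<and>
         f (lift vs) a + f (lift vs) b + f (lift vs) c + f (lift vs) d = 1"
proof -
  have l: "lottery A (f (lift vs))" by (rule lottery_lift[OF len])
  have "sum (f (lift vs)) A = sum (f (lift vs)) {a,b,c,d}"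
    using fin inA pareto_zero[OF len val] by (intro sum.mono_neutral_right) auto
  then show ?thesis using l dist' unfolding lottery_def by auto
qed

end


context ctx begin

lemma U_diff: "U v x (\<lambda>y. p y - q y) = U v x p - U v x q"
  unfolding U_def by (simp add: sum_subtractf[symmetric] if_distrib cong: if_cong) 

lemma valid_upd: "\<forall>v\<in>set vs. valid v \<Longrightarrow> valid w \<Longrightarrow> \<forall>v\<in>set (vs[j:=w]). valid v"
  using set_update_subset_insert by fastforce

lemma of_rank_upper: "x \<in> A \<Longrightarrow> {y\<in>A. (y,x) \<in> of_rank A v} = {y\<in>A. v x \<le> v y}"
  unfolding of_rank_def by auto

lemma sp_lift:
  assumes len: "length vs = 4" and val: "\<forall>v\<in>set vs. valid v" and j: "j < 4" and w: "valid w"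
  shows "\<not> ((\<forall>x\<in>{a,b,c,d}. U (vs!j) x (f (lift vs)) \<le> U (vs!j) x (f (lift (vs[j:=w])))) \<and>
            (\<exists>x\<in>{a,b,c,d}. U (vs!j) x (f (lift vs)) < U (vs!j) x (f (lift (vs[j:=w])))))"
proof
  assume H: "(\<forall>x\<in>{a,b,c,d}. U (vs!j) x (f (lift vs)) \<le> U (vs!j) x (f (lift (vs[j:=w])))) \<and>
            (\<exists>x\<in>{a,b,c,d}. U (vs!j) x (f (lift vs)) < U (vs!j) x (f (lift (vs[j:=w]))))"
  have len': "length (vs[j:=w]) = 4" using len by simp
  have val': "\<forall>v\<in>set (vs[j:=w]). valid v" by (rule valid_upd[OF val w])
  define v where "v = vs ! j"
  have vval: "valid v" using val len j unfolding v_def by simp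
  have Rj: "lift vs ! j = of_rank A v" using nth_lift[OF len, of j] j n4 unfolding v_def by simp
  have upd: "(lift vs)[j := of_rank A w] = lift (vs[j:=w])" by (rule lift_upd[OF len j])
  have z: "\<forall>y. y \<notin> {a,b,c,d} \<longrightarrow> f (lift (vs[j:=w])) y - f (lift vs) y = 0"
    using pareto_zero[OF len val] pareto_zero[OF len' val'] by auto
  have key: "sum (\<lambda>y. f (lift (vs[j:=w])) y - f (lift vs) y) {y\<in>A. (y,x) \<in> lift vs ! j}
        = U v x (f (lift (vs[j:=w]))) - U v x (f (lift vs))" if "x \<in> A" for x
    unfolding Rj of_rank_upper[OF that] using sum_restrict[OF z] U_diff by simp
  have out: "U v x (f (lift (vs[j:=w]))) - U v x (f (lift vs)) = 0" if "x \<notin> {a,b,c,d}" for x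
  proof -
    have "v x = 0" using vval that unfolding valid_def by auto
    then show ?thesis using U_all lot4[OF len val] lot4[OF len' val'] by simp
  qed
  show False
  proof (rule manip[OF fin sds spr profile_lift[OF len] _ weak_order_of_rank])
    show "j < n" using j n4 by simp
    show "profile A n ((lift vs)[j := of_rank A w])" unfolding upd by (rule profile_lift[OF len'])
    show "\<forall>x\<in>A. 0 \<le> sum (\<lambda>y. f ((lift vs)[j := of_rank A w]) y - f (lift vs) y) {y \<in> A. (y, x) \<in> lift vs ! j}"
      unfolding upd
    proof
      fix x assume x: "x \<in> A"
      show "0 \<le> sum (\<lambda>y. f (lift (vs[j:=w])) y - f (lift vs) y) {y \<in> A. (y, x) \<in> lift vs ! j}"
      proof (cases "x \<in> {a,b,c,d}")
        case True then show ?thesis using key[OF x] H unfolding v_def by auto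
      next
        case False then show ?thesis using key[OF x] out by simp
      qed
    qed
    show "\<exists>x\<in>A. 0 < sum (\<lambda>y. f ((lift vs)[j := of_rank A w]) y - f (lift vs) y) {y \<in> A. (y, x) \<in> lift vs ! j}"
      unfolding upd
    proof -
      from H obtain x where x: "x \<in> {a,b,c,d}" "U v x (f (lift vs)) < U v x (f (lift (vs[j:=w])))" unfolding v_def by blast
      have xA: "x \<in> A" using x inA by auto
      show "\<exists>x\<in>A. 0 < sum (\<lambda>y. f (lift (vs[j:=w])) y - f (lift vs) y) {y \<in> A. (y, x) \<in> lift vs ! j}"
        using key[OF xA] x xA by (intro bexI[of _ x]) auto
    qed
  qed
qed

definition dl :: "real \<Rightarrow> real \<Rightarrow> real \<Rightarrow> real \<Rightarrow> 'a \<Rightarrow> real" where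
  "dl da db dc dd y = (if y = a then da else if y = b then db else if y = c then dc else if y = d then dd else 0)"

lemma eff_lift:
  assumes len: "length vs = 4" and val: "\<forall>v\<in>set vs. valid v"
    and s0: "da + db + dc + dd = 0"
    and up: "\<forall>v\<in>set vs. \<forall>x\<in>{a,b,c,d}. U v x (dl da db dc dd) \<ge> 0"
    and strict: "\<exists>v\<in>set vs. \<exists>x\<in>{a,b,c,d}. U v x (dl da db dc dd) > 0"
    and supp: "(da < 0 \<longrightarrow> f (lift vs) a > 0) \<and> (db < 0 \<longrightarrow> f (lift vs) b > 0) \<and>
               (dc < 0 \<longrightarrow> f (lift vs) c > 0) \<and> (dd < 0 \<longrightarrow> f (lift vs) d > 0)"
  shows False
proof -
  let ?\<delta> = "dl da db dc dd"
  have z: "\<forall>y. y \<notin> {a,b,c,d} \<longrightarrow> ?\<delta> y = 0" unfolding dl_def by auto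
  have sA: "sum ?\<delta> A = 0"
  proof -
    have "sum ?\<delta> A = sum ?\<delta> {a,b,c,d}" using fin inA z by (intro sum.mono_neutral_right) auto
    then show ?thesis using s0 dist' by (simp add: dl_def)
  qed
  have U0: "U v x ?\<delta> = 0" if "v x = 0" for v x using U_all[of v x, OF that] s0 dist' by (simp add: dl_def)
  have upi: "sum ?\<delta> {y\<in>A. (y,x) \<in> lift vs ! i} = (if i < 4 then U (vs!i) x ?\<delta> else 0)"
    if "i < n" "x \<in> A" for i x
  proof (cases "i < 4")
    case True then show ?thesis using nth_lift[OF len that(1)] of_rank_upper[OF that(2)] sum_restrict[OF z] by simp
  next
    case False
    then have "{y\<in>A. (y,x) \<in> lift vs ! i} = A" using nth_lift[OF len that(1)] that by auto
    then show ?thesis using sA False by simp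
  qed
  have Uall: "U (vs!i) x ?\<delta> \<ge> 0" if "i < 4" "x \<in> A" for i x
  proof (cases "x \<in> {a,b,c,d}")
    case True then show ?thesis using up that len by auto
  next
    case False
    have "valid (vs!i)" using val that len by auto
    then have "(vs!i) x = 0" using False unfolding valid_def by auto
    then show ?thesis using U0 by simp
  qed
  show False
  proof (rule eff_delta[OF fin sds effi profile_lift[OF len]])
    show "\<forall>x. x \<notin> A \<longrightarrow> ?\<delta> x = 0" using inA by (auto simp: dl_def)
    show "sum ?\<delta> A = 0" by fact
    show "\<forall>i<n. \<forall>x\<in>A. 0 \<le> sum ?\<delta> {y \<in> A. (y, x) \<in> lift vs ! i}" using upi Uall by simp
    from strict obtain v x where vx: "v \<in> set vs" "x \<in> {a,b,c,d}" "U v x ?\<delta> > 0" by auto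
    then obtain i where i: "i < 4" "vs ! i = v" using len by (metis in_set_conv_nth)
    have "x \<in> A" using vx inA by auto
    then show "\<exists>i<n. \<exists>x\<in>A. 0 < sum ?\<delta> {y \<in> A. (y, x) \<in> lift vs ! i}"
      using upi[of i x] i vx n4 by (intro exI[of _ i] conjI bexI[of _ x]) auto
    show "\<forall>x\<in>A. ?\<delta> x < 0 \<longrightarrow> 0 < f (lift vs) x" using supp by (auto simp: dl_def)
  qed
qed

end


context ctx begin

definition pm :: "'a \<Rightarrow> 'a \<Rightarrow> 'a \<Rightarrow> 'a \<Rightarrow> 'a \<Rightarrow> 'a" where
  "pm a' b' c' d' x = (if x = a then a' else if x = b then b' else if x = c then c' else if x = d then d' else x)"

lemma pm_permutes:
  assumes ds: "distinct [a',b',c',d']" and st: "{a',b',c',d'} = {a,b,c,d}"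
  shows "pm a' b' c' d' permutes A"
proof -
  let ?S = "{a,b,c,d}"
  have ev: "pm a' b' c' d' a = a'" "pm a' b' c' d' b = b'" "pm a' b' c' d' c = c'" "pm a' b' c' d' d = d'"
    unfolding pm_def using dist' by auto
  have inj: "inj_on (pm a' b' c' d') ?S"
  proof -
    have im: "pm a' b' c' d' ` ?S = {a',b',c',d'}" using ev by simp
    have c1: "card {a',b',c',d'} = 4" using distinct_card[OF ds] by simp
    have c2: "card ?S = 4" using distinct_card[of "[a,b,c,d]"] dist' by simp
    show ?thesis by (subst inj_on_iff_eq_card) (use im c1 c2 in auto)
  qed
  have img0: "pm a' b' c' d' ` ?S = {a',b',c',d'}" by (simp add: ev)
  have img: "pm a' b' c' d' ` ?S = ?S" using img0 st by simp
  have "pm a' b' c' d' permutes ?S"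
    proof (rule bij_imp_permutes)
    show "bij_betw (pm a' b' c' d') ?S ?S" using inj img by (simp add: bij_betw_def)
    fix x assume "x \<notin> ?S" then show "pm a' b' c' d' x = x" unfolding pm_def by auto
  qed
  then show ?thesis by (rule permutes_subset) (use inA in auto)
qed

lemma rank_perm:
  assumes p: "p permutes A" and w: "\<forall>z\<in>A. w (p z) = v z"
  shows "map_prod p p ` of_rank A v = of_rank A w"
proof
  show "map_prod p p ` of_rank A v \<subseteq> of_rank A w"
    using w permutes_in_image[OF p] unfolding of_rank_def by auto
next
  show "of_rank A w \<subseteq> map_prod p p ` of_rank A v"
  proof
    fix q assume q: "q \<in> of_rank A w"
    then obtain x' y' where q': "q = (x', y')" "x' \<in> A" "y' \<in> A" "w y' \<le> w x'" unfolding of_rank_def by auto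
    have im: "p ` A = A" by (rule permutes_image[OF p])
    obtain x where x: "x \<in> A" "p x = x'" using q' im by (metis imageE)
    obtain y where y: "y \<in> A" "p y = y'" using q' im by (metis imageE)
    have "(x,y) \<in> of_rank A v" using x y q' w unfolding of_rank_def by auto
    then show "q \<in> map_prod p p ` of_rank A v" using x y q' by force
  qed
qed

lemma neutral_lift:
  assumes len: "length vs = 4" and lenw: "length ws = 4"
    and val: "\<forall>v\<in>set vs. valid v" and valw: "\<forall>v\<in>set ws. valid v"
    and ds: "distinct [a',b',c',d']" and st: "{a',b',c',d'} = {a,b,c,d}"
    and rel: "list_all2 (\<lambda>w v. \<forall>z\<in>{a,b,c,d}. w (pm a' b' c' d' z) = v z) ws vs"
  shows "f (lift vs) x = f (lift ws) (pm a' b' c' d' x)"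
proof -
  let ?p = "pm a' b' c' d'"
  have p: "?p permutes A" by (rule pm_permutes[OF ds st])
  have "f (lift vs) x = f (perm_profile ?p (lift vs)) (?p x)"
    using neut p profile_lift[OF len] unfolding neutral_def by blast
  moreover have "perm_profile ?p (lift vs) = lift ws"
  proof -
    have AA: "map_prod ?p ?p ` (A \<times> A) = A \<times> A"
      using map_prod_surj_on[OF permutes_image[OF p] permutes_image[OF p]] .
    have each: "map_prod ?p ?p ` of_rank A (vs ! i) = of_rank A (ws ! i)" if i: "i < 4" for i
    proof (rule rank_perm[OF p])
      have vv: "valid (vs ! i)" "valid (ws ! i)" using val valw i len lenw by auto
      have r: "\<forall>z\<in>{a,b,c,d}. (ws ! i) (?p z) = (vs ! i) z" using rel i len
        by (simp add: list_all2_conv_all_nth)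
      show "\<forall>z\<in>A. (ws ! i) (?p z) = (vs ! i) z"
      proof
        fix z assume "z \<in> A"
        show "(ws ! i) (?p z) = (vs ! i) z"
        proof (cases "z \<in> {a,b,c,d}")
          case True then show ?thesis using r by blast
        next
          case False
          then have "?p z = z" unfolding pm_def by auto
          then show ?thesis using vv False unfolding valid_def by auto
        qed
      qed
    qed
    have "map (\<lambda>r. map_prod ?p ?p ` r) (map (of_rank A) vs) = map (of_rank A) ws"
      by (rule nth_equalityI) (use len lenw each in auto)
    then show ?thesis unfolding perm_profile_def lift_def using AA by simp
  qed
  ultimately show ?thesis by simp
qed

lemma anon_lift:
  assumes len: "length vs = 4" and ds: "distinct ss" and st: "set ss = {0,1,2,3}"
  shows "f (lift vs) = f (lift (map (nth vs) ss))"
proof -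
  have lss: "length ss = 4"
  proof -
    have "length ss = card {0::nat,1,2,3}" using ds st by (metis distinct_card)
    also have "\<dots> = 4" by simp
    finally show ?thesis .
  qed
  have lt: "ss ! i < 4" if "i < 4" for i
  proof -
    have "ss ! i \<in> set ss" using that lss by simp
    then have "ss ! i \<in> {0,1,2,3}" using st by simp
    then show ?thesis by auto
  qed
  define \<sigma> where "\<sigma> = (\<lambda>i::nat. if i < 4 then ss ! i else i)"
  have inj: "inj_on \<sigma> {0..<n}"
  proof (rule inj_onI)
    fix i j assume ij: "i \<in> {0..<n}" "j \<in> {0..<n}" "\<sigma> i = \<sigma> j"
    show "i = j"
    proof (cases "i < 4 \<and> j < 4")
      case True
      then have "ss ! i = ss ! j" using ij(3) unfolding \<sigma>_def by simp
      then show ?thesis using True lss ds nth_eq_iff_index_eq by (metis)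
    next
      case False
      then show ?thesis using ij(3) lt unfolding \<sigma>_def by (metis not_less order.strict_trans2 less_irrefl)
    qed
  qed
  have sub: "\<sigma> ` {0..<n} \<subseteq> {0..<n}"
  proof
    fix y assume "y \<in> \<sigma> ` {0..<n}"
    then obtain i where i: "i < n" "y = \<sigma> i" by auto
    show "y \<in> {0..<n}"
    proof (cases "i < 4")
      case True then have "ss ! i < 4" by (rule lt)
      then show ?thesis using i True n4 unfolding \<sigma>_def by simp
    next
      case False then show ?thesis using i unfolding \<sigma>_def by simp
    qed
  qed
  have img: "\<sigma> ` {0..<n} = {0..<n}" by (rule endo_inj_surj[OF _ sub inj]) simp
  have perm: "\<sigma> permutes {0..<n}"
    by (rule bij_imp_permutes) (use inj img n4 in \<open>auto simp: bij_betw_def \<sigma>_def\<close>)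
  have "f (lift vs) = f (map (\<lambda>i. lift vs ! \<sigma> i) [0..<n])"
    using anon perm profile_lift[OF len] unfolding anonymous_def by blast
  moreover have "map (\<lambda>i. lift vs ! \<sigma> i) [0..<n] = lift (map (nth vs) ss)"
  proof (rule nth_equalityI)
    show "length (map (\<lambda>i. lift vs ! \<sigma> i) [0..<n]) = length (lift (map (nth vs) ss))"
      using length_lift[of "map (nth vs) ss"] lss by simp
    fix i assume "i < length (map (\<lambda>i. lift vs ! \<sigma> i) [0..<n])"
    then have i: "i < n" by simp
    show "map (\<lambda>i. lift vs ! \<sigma> i) [0..<n] ! i = lift (map (nth vs) ss) ! i"
    proof (cases "i < 4")
      case True
      have "ss ! i < 4" using lt True by simp
      then have "lift vs ! (ss ! i) = of_rank A (vs ! (ss ! i))" using nth_lift[OF len, of "ss ! i"] n4 by simp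
      then show ?thesis using i True nth_lift[of "map (nth vs) ss" i] lss unfolding \<sigma>_def by simp
    next
      case False
      then show ?thesis using i nth_lift[OF len, of i] nth_lift[of "map (nth vs) ss" i] lss unfolding \<sigma>_def by simp
    qed
  qed
  ultimately show ?thesis by simp
qed

end

context ctx begin

lemma U_expand: "U v x p = (if v x \<le> v a then p a else 0) + (if v x \<le> v b then p b else 0) + (if v x \<le> v c then p c else 0) + (if v x \<le> v d then p d else 0)"
  unfolding U_def using dist' by (simp add: add.assoc)

definition "r_ab_c_d = (\<lambda>x. if x = a \<or> x = b then (3::nat) else if x = c then (2::nat) else if x = d then (1::nat) else 0)"

lemma r_ab_c_d_simps [simp]: "r_ab_c_d a = 3" "r_ab_c_d b = 3" "r_ab_c_d c = 2" "r_ab_c_d d = 1"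
  unfolding r_ab_c_d_def using dist' by auto

lemma valid_r_ab_c_d [simp]: "valid r_ab_c_d"
  unfolding valid_def r_ab_c_d_def by auto

definition "r_ab_d_c = (\<lambda>x. if x = a \<or> x = b then (3::nat) else if x = d then (2::nat) else if x = c then (1::nat) else 0)"

lemma r_ab_d_c_simps [simp]: "r_ab_d_c a = 3" "r_ab_d_c b = 3" "r_ab_d_c c = 1" "r_ab_d_c d = 2"
  unfolding r_ab_d_c_def using dist' by auto

lemma valid_r_ab_d_c [simp]: "valid r_ab_d_c"
  unfolding valid_def r_ab_d_c_def by auto

definition "r_ab_cd = (\<lambda>x. if x = a \<or> x = b then (2::nat) else if x = c \<or> x = d then (1::nat) else 0)"

lemma r_ab_cd_simps [simp]: "r_ab_cd a = 2" "r_ab_cd b = 2" "r_ab_cd c = 1" "r_ab_cd d = 1"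
  unfolding r_ab_cd_def using dist' by auto

lemma valid_r_ab_cd [simp]: "valid r_ab_cd"
  unfolding valid_def r_ab_cd_def by auto

definition "r_ac_b_d = (\<lambda>x. if x = a \<or> x = c then (3::nat) else if x = b then (2::nat) else if x = d then (1::nat) else 0)"

lemma r_ac_b_d_simps [simp]: "r_ac_b_d a = 3" "r_ac_b_d b = 2" "r_ac_b_d c = 3" "r_ac_b_d d = 1"
  unfolding r_ac_b_d_def using dist' by auto

lemma valid_r_ac_b_d [simp]: "valid r_ac_b_d"
  unfolding valid_def r_ac_b_d_def by auto

definition "r_ac_d_b = (\<lambda>x. if x = a \<or> x = c then (3::nat) else if x = d then (2::nat) else if x = b then (1::nat) else 0)"

lemma r_ac_d_b_simps [simp]: "r_ac_d_b a = 3" "r_ac_d_b b = 1" "r_ac_d_b c = 3" "r_ac_d_b d = 2"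
  unfolding r_ac_d_b_def using dist' by auto

lemma valid_r_ac_d_b [simp]: "valid r_ac_d_b"
  unfolding valid_def r_ac_d_b_def by auto

definition "r_ac_bd = (\<lambda>x. if x = a \<or> x = c then (2::nat) else if x = b \<or> x = d then (1::nat) else 0)"

lemma r_ac_bd_simps [simp]: "r_ac_bd a = 2" "r_ac_bd b = 1" "r_ac_bd c = 2" "r_ac_bd d = 1"
  unfolding r_ac_bd_def using dist' by auto

lemma valid_r_ac_bd [simp]: "valid r_ac_bd"
  unfolding valid_def r_ac_bd_def by auto

definition "r_ad_b_c = (\<lambda>x. if x = a \<or> x = d then (3::nat) else if x = b then (2::nat) else if x = c then (1::nat) else 0)"

lemma r_ad_b_c_simps [simp]: "r_ad_b_c a = 3" "r_ad_b_c b = 2" "r_ad_b_c c = 1" "r_ad_b_c d = 3"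
  unfolding r_ad_b_c_def using dist' by auto

lemma valid_r_ad_b_c [simp]: "valid r_ad_b_c"
  unfolding valid_def r_ad_b_c_def by auto

definition "r_ad_c_b = (\<lambda>x. if x = a \<or> x = d then (3::nat) else if x = c then (2::nat) else if x = b then (1::nat) else 0)"

lemma r_ad_c_b_simps [simp]: "r_ad_c_b a = 3" "r_ad_c_b b = 1" "r_ad_c_b c = 2" "r_ad_c_b d = 3"
  unfolding r_ad_c_b_def using dist' by auto

lemma valid_r_ad_c_b [simp]: "valid r_ad_c_b"
  unfolding valid_def r_ad_c_b_def by auto

definition "r_ad_bc = (\<lambda>x. if x = a \<or> x = d then (2::nat) else if x = b \<or> x = c then (1::nat) else 0)"

lemma r_ad_bc_simps [simp]: "r_ad_bc a = 2" "r_ad_bc b = 1" "r_ad_bc c = 1" "r_ad_bc d = 2"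
  unfolding r_ad_bc_def using dist' by auto

lemma valid_r_ad_bc [simp]: "valid r_ad_bc"
  unfolding valid_def r_ad_bc_def by auto

definition "r_bc_a_d = (\<lambda>x. if x = b \<or> x = c then (3::nat) else if x = a then (2::nat) else if x = d then (1::nat) else 0)"

lemma r_bc_a_d_simps [simp]: "r_bc_a_d a = 2" "r_bc_a_d b = 3" "r_bc_a_d c = 3" "r_bc_a_d d = 1"
  unfolding r_bc_a_d_def using dist' by auto

lemma valid_r_bc_a_d [simp]: "valid r_bc_a_d"
  unfolding valid_def r_bc_a_d_def by auto

definition "r_bc_ad = (\<lambda>x. if x = b \<or> x = c then (2::nat) else if x = a \<or> x = d then (1::nat) else 0)"

lemma r_bc_ad_simps [simp]: "r_bc_ad a = 1" "r_bc_ad b = 2" "r_bc_ad c = 2" "r_bc_ad d = 1"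
  unfolding r_bc_ad_def using dist' by auto

lemma valid_r_bc_ad [simp]: "valid r_bc_ad"
  unfolding valid_def r_bc_ad_def by auto

definition "r_bd_c_a = (\<lambda>x. if x = b \<or> x = d then (3::nat) else if x = c then (2::nat) else if x = a then (1::nat) else 0)"

lemma r_bd_c_a_simps [simp]: "r_bd_c_a a = 1" "r_bd_c_a b = 3" "r_bd_c_a c = 2" "r_bd_c_a d = 3"
  unfolding r_bd_c_a_def using dist' by auto

lemma valid_r_bd_c_a [simp]: "valid r_bd_c_a"
  unfolding valid_def r_bd_c_a_def by auto

definition "r_bd_ac = (\<lambda>x. if x = b \<or> x = d then (2::nat) else if x = a \<or> x = c then (1::nat) else 0)"

lemma r_bd_ac_simps [simp]: "r_bd_ac a = 1" "r_bd_ac b = 2" "r_bd_ac c = 1" "r_bd_ac d = 2"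
  unfolding r_bd_ac_def using dist' by auto

lemma valid_r_bd_ac [simp]: "valid r_bd_ac"
  unfolding valid_def r_bd_ac_def by auto

definition "r_cd_a_b = (\<lambda>x. if x = c \<or> x = d then (3::nat) else if x = a then (2::nat) else if x = b then (1::nat) else 0)"

lemma r_cd_a_b_simps [simp]: "r_cd_a_b a = 2" "r_cd_a_b b = 1" "r_cd_a_b c = 3" "r_cd_a_b d = 3"
  unfolding r_cd_a_b_def using dist' by auto

lemma valid_r_cd_a_b [simp]: "valid r_cd_a_b"
  unfolding valid_def r_cd_a_b_def by auto

definition "r_cd_b_a = (\<lambda>x. if x = c \<or> x = d then (3::nat) else if x = b then (2::nat) else if x = a then (1::nat) else 0)"

lemma r_cd_b_a_simps [simp]: "r_cd_b_a a = 1" "r_cd_b_a b = 2" "r_cd_b_a c = 3" "r_cd_b_a d = 3"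
  unfolding r_cd_b_a_def using dist' by auto

lemma valid_r_cd_b_a [simp]: "valid r_cd_b_a"
  unfolding valid_def r_cd_b_a_def by auto

definition "r_cd_ab = (\<lambda>x. if x = c \<or> x = d then (2::nat) else if x = a \<or> x = b then (1::nat) else 0)"

lemma r_cd_ab_simps [simp]: "r_cd_ab a = 1" "r_cd_ab b = 1" "r_cd_ab c = 2" "r_cd_ab d = 2"
  unfolding r_cd_ab_def using dist' by auto

lemma valid_r_cd_ab [simp]: "valid r_cd_ab"
  unfolding valid_def r_cd_ab_def by auto

definition "P38 = lift [r_ab_c_d, r_ab_c_d, r_ac_b_d, r_bc_ad]"

definition "P41 = lift [r_ab_c_d, r_ab_c_d, r_ac_b_d, r_bd_ac]"

definition "P67 = lift [r_ab_c_d, r_ab_c_d, r_ac_bd, r_cd_b_a]"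

definition "P68 = lift [r_ab_c_d, r_ab_c_d, r_ac_bd, r_cd_ab]"

definition "P73 = lift [r_ab_c_d, r_ab_c_d, r_ad_b_c, r_bd_ac]"

definition "P85 = lift [r_ab_c_d, r_ab_c_d, r_ad_bc, r_bd_ac]"

definition "P90 = lift [r_ab_c_d, r_ab_c_d, r_cd_a_b, r_cd_b_a]"

definition "P130 = lift [r_ab_c_d, r_ab_d_c, r_cd_a_b, r_cd_b_a]"

definition "P230 = lift [r_ab_c_d, r_ac_d_b, r_ad_bc, r_bc_ad]"

definition "P265 = lift [r_ab_c_d, r_ac_bd, r_ad_bc, r_cd_ab]"

definition "P266 = lift [r_ab_c_d, r_ac_bd, r_bc_ad, r_cd_ab]"

definition "P267 = lift [r_ab_c_d, r_ac_bd, r_bd_c_a, r_cd_ab]"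

definition "P270 = lift [r_ab_c_d, r_ac_bd, r_bd_ac, r_cd_b_a]"

definition "P290 = lift [r_ab_cd, r_ac_bd, r_ad_bc, r_bc_ad]"

definition "Q0 = lift [r_ab_c_d, r_ab_c_d, r_ad_b_c, r_bd_ac]"

definition "Q1 = lift [r_ab_c_d, r_ab_c_d, r_ac_b_d, r_bc_ad]"

definition "Q2 = lift [r_ab_c_d, r_ab_c_d, r_cd_a_b, r_cd_b_a]"

definition "Q3 = lift [r_ab_c_d, r_ab_c_d, r_ac_bd, r_bc_a_d]"

definition "Q4 = lift [r_ad_bc, r_ab_c_d, r_ac_bd, r_cd_ab]"

definition "Q5 = lift [r_ab_c_d, r_ab_c_d, r_ac_bd, r_cd_b_a]"

definition "Q6 = lift [r_ac_bd, r_ab_c_d, r_ad_b_c, r_bd_ac]"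

definition "Q7 = lift [r_ab_c_d, r_ab_c_d, r_ad_bc, r_bd_ac]"

definition "Q8 = lift [r_ab_c_d, r_ab_d_c, r_cd_a_b, r_cd_a_b]"

definition "Q9 = lift [r_ab_c_d, r_cd_a_b, r_ad_bc, r_bc_ad]"

definition "Q10 = lift [r_ab_cd, r_ac_bd, r_ad_bc, r_cd_ab]"

definition "Q11 = lift [r_ab_cd, r_ac_bd, r_bc_ad, r_cd_ab]"

definition "Q12 = lift [r_ab_c_d, r_ad_c_b, r_bc_ad, r_cd_ab]"

lemma lot_P38: "f P38 a \<ge> 0 \<and> f P38 b \<ge> 0 \<and> f P38 c \<ge> 0 \<and> f P38 d \<ge> 0 \<and> f P38 a + f P38 b + f P38 c + f P38 d = 1"
  unfolding P38_def by (rule lot4) simp_all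

lemma lot_P41: "f P41 a \<ge> 0 \<and> f P41 b \<ge> 0 \<and> f P41 c \<ge> 0 \<and> f P41 d \<ge> 0 \<and> f P41 a + f P41 b + f P41 c + f P41 d = 1"
  unfolding P41_def by (rule lot4) simp_all

lemma lot_P67: "f P67 a \<ge> 0 \<and> f P67 b \<ge> 0 \<and> f P67 c \<ge> 0 \<and> f P67 d \<ge> 0 \<and> f P67 a + f P67 b + f P67 c + f P67 d = 1"
  unfolding P67_def by (rule lot4) simp_all

lemma lot_P68: "f P68 a \<ge> 0 \<and> f P68 b \<ge> 0 \<and> f P68 c \<ge> 0 \<and> f P68 d \<ge> 0 \<and> f P68 a + f P68 b + f P68 c + f P68 d = 1"
  unfolding P68_def by (rule lot4) simp_all

lemma lot_P73: "f P73 a \<ge> 0 \<and> f P73 b \<ge> 0 \<and> f P73 c \<ge> 0 \<and> f P73 d \<ge> 0 \<and> f P73 a + f P73 b + f P73 c + f P73 d = 1"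
  unfolding P73_def by (rule lot4) simp_all

lemma lot_P85: "f P85 a \<ge> 0 \<and> f P85 b \<ge> 0 \<and> f P85 c \<ge> 0 \<and> f P85 d \<ge> 0 \<and> f P85 a + f P85 b + f P85 c + f P85 d = 1"
  unfolding P85_def by (rule lot4) simp_all

lemma lot_P90: "f P90 a \<ge> 0 \<and> f P90 b \<ge> 0 \<and> f P90 c \<ge> 0 \<and> f P90 d \<ge> 0 \<and> f P90 a + f P90 b + f P90 c + f P90 d = 1"
  unfolding P90_def by (rule lot4) simp_all

lemma lot_P130: "f P130 a \<ge> 0 \<and> f P130 b \<ge> 0 \<and> f P130 c \<ge> 0 \<and> f P130 d \<ge> 0 \<and> f P130 a + f P130 b + f P130 c + f P130 d = 1"
  unfolding P130_def by (rule lot4) simp_all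

lemma lot_P230: "f P230 a \<ge> 0 \<and> f P230 b \<ge> 0 \<and> f P230 c \<ge> 0 \<and> f P230 d \<ge> 0 \<and> f P230 a + f P230 b + f P230 c + f P230 d = 1"
  unfolding P230_def by (rule lot4) simp_all

lemma lot_P265: "f P265 a \<ge> 0 \<and> f P265 b \<ge> 0 \<and> f P265 c \<ge> 0 \<and> f P265 d \<ge> 0 \<and> f P265 a + f P265 b + f P265 c + f P265 d = 1"
  unfolding P265_def by (rule lot4) simp_all

lemma lot_P266: "f P266 a \<ge> 0 \<and> f P266 b \<ge> 0 \<and> f P266 c \<ge> 0 \<and> f P266 d \<ge> 0 \<and> f P266 a + f P266 b + f P266 c + f P266 d = 1"
  unfolding P266_def by (rule lot4) simp_all

lemma lot_P267: "f P267 a \<ge> 0 \<and> f P267 b \<ge> 0 \<and> f P267 c \<ge> 0 \<and> f P267 d \<ge> 0 \<and> f P267 a + f P267 b + f P267 c + f P267 d = 1"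
  unfolding P267_def by (rule lot4) simp_all

lemma lot_P270: "f P270 a \<ge> 0 \<and> f P270 b \<ge> 0 \<and> f P270 c \<ge> 0 \<and> f P270 d \<ge> 0 \<and> f P270 a + f P270 b + f P270 c + f P270 d = 1"
  unfolding P270_def by (rule lot4) simp_all

lemma lot_P290: "f P290 a \<ge> 0 \<and> f P290 b \<ge> 0 \<and> f P290 c \<ge> 0 \<and> f P290 d \<ge> 0 \<and> f P290 a + f P290 b + f P290 c + f P290 d = 1"
  unfolding P290_def by (rule lot4) simp_all

lemma link0: "f P85 x = f P85 (pm b a c d x)"
proof -
  have "f (lift [r_ab_c_d, r_ab_c_d, r_ad_bc, r_bd_ac]) x = f (lift [r_ab_c_d, r_ab_c_d, r_bd_ac, r_ad_bc]) (pm b a c d x)"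
    by (rule neutral_lift) (auto simp: pm_def dist')
  moreover have "f (lift [r_ab_c_d, r_ab_c_d, r_bd_ac, r_ad_bc]) = f (lift [r_ab_c_d, r_ab_c_d, r_ad_bc, r_bd_ac])"
  proof -
    have "f (lift [r_ab_c_d, r_ab_c_d, r_bd_ac, r_ad_bc]) = f (lift (map (nth [r_ab_c_d, r_ab_c_d, r_bd_ac, r_ad_bc]) [0,1,3,2]))" by (rule anon_lift) auto
    then show ?thesis by simp
  qed
  ultimately show ?thesis unfolding P85_def P85_def by simp
qed

lemma link0_a: "f P85 a = f P85 b" using link0[of a] dist' by (simp add: pm_def)

lemma link0_b: "f P85 b = f P85 a" using link0[of b] dist' by (simp add: pm_def)

lemma link0_c: "f P85 c = f P85 c" using link0[of c] dist' by (simp add: pm_def)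

lemma link0_d: "f P85 d = f P85 d" using link0[of d] dist' by (simp add: pm_def)

lemma link1: "f P90 x = f P90 (pm b a c d x)"
proof -
  have "f (lift [r_ab_c_d, r_ab_c_d, r_cd_a_b, r_cd_b_a]) x = f (lift [r_ab_c_d, r_ab_c_d, r_cd_b_a, r_cd_a_b]) (pm b a c d x)"
    by (rule neutral_lift) (auto simp: pm_def dist')
  moreover have "f (lift [r_ab_c_d, r_ab_c_d, r_cd_b_a, r_cd_a_b]) = f (lift [r_ab_c_d, r_ab_c_d, r_cd_a_b, r_cd_b_a])"
  proof -
    have "f (lift [r_ab_c_d, r_ab_c_d, r_cd_b_a, r_cd_a_b]) = f (lift (map (nth [r_ab_c_d, r_ab_c_d, r_cd_b_a, r_cd_a_b]) [0,1,3,2]))" by (rule anon_lift) auto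
    then show ?thesis by simp
  qed
  ultimately show ?thesis unfolding P90_def P90_def by simp
qed

lemma link1_a: "f P90 a = f P90 b" using link1[of a] dist' by (simp add: pm_def)

lemma link1_b: "f P90 b = f P90 a" using link1[of b] dist' by (simp add: pm_def)

lemma link1_c: "f P90 c = f P90 c" using link1[of c] dist' by (simp add: pm_def)

lemma link1_d: "f P90 d = f P90 d" using link1[of d] dist' by (simp add: pm_def)

lemma link2: "f P130 x = f P130 (pm a b d c x)"
proof -
  have "f (lift [r_ab_c_d, r_ab_d_c, r_cd_a_b, r_cd_b_a]) x = f (lift [r_ab_d_c, r_ab_c_d, r_cd_a_b, r_cd_b_a]) (pm a b d c x)"
    by (rule neutral_lift) (auto simp: pm_def dist')
  moreover have "f (lift [r_ab_d_c, r_ab_c_d, r_cd_a_b, r_cd_b_a]) = f (lift [r_ab_c_d, r_ab_d_c, r_cd_a_b, r_cd_b_a])"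
  proof -
    have "f (lift [r_ab_d_c, r_ab_c_d, r_cd_a_b, r_cd_b_a]) = f (lift (map (nth [r_ab_d_c, r_ab_c_d, r_cd_a_b, r_cd_b_a]) [1,0,2,3]))" by (rule anon_lift) auto
    then show ?thesis by simp
  qed
  ultimately show ?thesis unfolding P130_def P130_def by simp
qed

lemma link2_a: "f P130 a = f P130 a" using link2[of a] dist' by (simp add: pm_def)

lemma link2_b: "f P130 b = f P130 b" using link2[of b] dist' by (simp add: pm_def)

lemma link2_c: "f P130 c = f P130 d" using link2[of c] dist' by (simp add: pm_def)

lemma link2_d: "f P130 d = f P130 c" using link2[of d] dist' by (simp add: pm_def)

lemma link3: "f P130 x = f P130 (pm b a c d x)"
proof -
  have "f (lift [r_ab_c_d, r_ab_d_c, r_cd_a_b, r_cd_b_a]) x = f (lift [r_ab_c_d, r_ab_d_c, r_cd_b_a, r_cd_a_b]) (pm b a c d x)"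
    by (rule neutral_lift) (auto simp: pm_def dist')
  moreover have "f (lift [r_ab_c_d, r_ab_d_c, r_cd_b_a, r_cd_a_b]) = f (lift [r_ab_c_d, r_ab_d_c, r_cd_a_b, r_cd_b_a])"
  proof -
    have "f (lift [r_ab_c_d, r_ab_d_c, r_cd_b_a, r_cd_a_b]) = f (lift (map (nth [r_ab_c_d, r_ab_d_c, r_cd_b_a, r_cd_a_b]) [0,1,3,2]))" by (rule anon_lift) auto
    then show ?thesis by simp
  qed
  ultimately show ?thesis unfolding P130_def P130_def by simp
qed

lemma link3_a: "f P130 a = f P130 b" using link3[of a] dist' by (simp add: pm_def)

lemma link3_b: "f P130 b = f P130 a" using link3[of b] dist' by (simp add: pm_def)

lemma link3_c: "f P130 c = f P130 c" using link3[of c] dist' by (simp add: pm_def)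

lemma link3_d: "f P130 d = f P130 d" using link3[of d] dist' by (simp add: pm_def)

lemma link4: "f P130 x = f P130 (pm b a d c x)"
proof -
  have "f (lift [r_ab_c_d, r_ab_d_c, r_cd_a_b, r_cd_b_a]) x = f (lift [r_ab_d_c, r_ab_c_d, r_cd_b_a, r_cd_a_b]) (pm b a d c x)"
    by (rule neutral_lift) (auto simp: pm_def dist')
  moreover have "f (lift [r_ab_d_c, r_ab_c_d, r_cd_b_a, r_cd_a_b]) = f (lift [r_ab_c_d, r_ab_d_c, r_cd_a_b, r_cd_b_a])"
  proof -
    have "f (lift [r_ab_d_c, r_ab_c_d, r_cd_b_a, r_cd_a_b]) = f (lift (map (nth [r_ab_d_c, r_ab_c_d, r_cd_b_a, r_cd_a_b]) [1,0,3,2]))" by (rule anon_lift) auto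
    then show ?thesis by simp
  qed
  ultimately show ?thesis unfolding P130_def P130_def by simp
qed

lemma link4_a: "f P130 a = f P130 b" using link4[of a] dist' by (simp add: pm_def)

lemma link4_b: "f P130 b = f P130 a" using link4[of b] dist' by (simp add: pm_def)

lemma link4_c: "f P130 c = f P130 d" using link4[of c] dist' by (simp add: pm_def)

lemma link4_d: "f P130 d = f P130 c" using link4[of d] dist' by (simp add: pm_def)

lemma link5: "f P130 x = f P130 (pm c d a b x)"
proof -
  have "f (lift [r_ab_c_d, r_ab_d_c, r_cd_a_b, r_cd_b_a]) x = f (lift [r_cd_a_b, r_cd_b_a, r_ab_c_d, r_ab_d_c]) (pm c d a b x)"
    by (rule neutral_lift) (auto simp: pm_def dist')
  moreover have "f (lift [r_cd_a_b, r_cd_b_a, r_ab_c_d, r_ab_d_c]) = f (lift [r_ab_c_d, r_ab_d_c, r_cd_a_b, r_cd_b_a])"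
  proof -
    have "f (lift [r_cd_a_b, r_cd_b_a, r_ab_c_d, r_ab_d_c]) = f (lift (map (nth [r_cd_a_b, r_cd_b_a, r_ab_c_d, r_ab_d_c]) [2,3,0,1]))" by (rule anon_lift) auto
    then show ?thesis by simp
  qed
  ultimately show ?thesis unfolding P130_def P130_def by simp
qed

lemma link5_a: "f P130 a = f P130 c" using link5[of a] dist' by (simp add: pm_def)

lemma link5_b: "f P130 b = f P130 d" using link5[of b] dist' by (simp add: pm_def)

lemma link5_c: "f P130 c = f P130 a" using link5[of c] dist' by (simp add: pm_def)

lemma link5_d: "f P130 d = f P130 b" using link5[of d] dist' by (simp add: pm_def)

lemma link6: "f P130 x = f P130 (pm c d b a x)"
proof -
  have "f (lift [r_ab_c_d, r_ab_d_c, r_cd_a_b, r_cd_b_a]) x = f (lift [r_cd_b_a, r_cd_a_b, r_ab_c_d, r_ab_d_c]) (pm c d b a x)"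
    by (rule neutral_lift) (auto simp: pm_def dist')
  moreover have "f (lift [r_cd_b_a, r_cd_a_b, r_ab_c_d, r_ab_d_c]) = f (lift [r_ab_c_d, r_ab_d_c, r_cd_a_b, r_cd_b_a])"
  proof -
    have "f (lift [r_cd_b_a, r_cd_a_b, r_ab_c_d, r_ab_d_c]) = f (lift (map (nth [r_cd_b_a, r_cd_a_b, r_ab_c_d, r_ab_d_c]) [2,3,1,0]))" by (rule anon_lift) auto
    then show ?thesis by simp
  qed
  ultimately show ?thesis unfolding P130_def P130_def by simp
qed

lemma link6_a: "f P130 a = f P130 c" using link6[of a] dist' by (simp add: pm_def)

lemma link6_b: "f P130 b = f P130 d" using link6[of b] dist' by (simp add: pm_def)

lemma link6_c: "f P130 c = f P130 b" using link6[of c] dist' by (simp add: pm_def)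

lemma link6_d: "f P130 d = f P130 a" using link6[of d] dist' by (simp add: pm_def)

lemma link7: "f P130 x = f P130 (pm d c a b x)"
proof -
  have "f (lift [r_ab_c_d, r_ab_d_c, r_cd_a_b, r_cd_b_a]) x = f (lift [r_cd_a_b, r_cd_b_a, r_ab_d_c, r_ab_c_d]) (pm d c a b x)"
    by (rule neutral_lift) (auto simp: pm_def dist')
  moreover have "f (lift [r_cd_a_b, r_cd_b_a, r_ab_d_c, r_ab_c_d]) = f (lift [r_ab_c_d, r_ab_d_c, r_cd_a_b, r_cd_b_a])"
  proof -
    have "f (lift [r_cd_a_b, r_cd_b_a, r_ab_d_c, r_ab_c_d]) = f (lift (map (nth [r_cd_a_b, r_cd_b_a, r_ab_d_c, r_ab_c_d]) [3,2,0,1]))" by (rule anon_lift) auto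
    then show ?thesis by simp
  qed
  ultimately show ?thesis unfolding P130_def P130_def by simp
qed

lemma link7_a: "f P130 a = f P130 d" using link7[of a] dist' by (simp add: pm_def)

lemma link7_b: "f P130 b = f P130 c" using link7[of b] dist' by (simp add: pm_def)

lemma link7_c: "f P130 c = f P130 a" using link7[of c] dist' by (simp add: pm_def)

lemma link7_d: "f P130 d = f P130 b" using link7[of d] dist' by (simp add: pm_def)

lemma link8: "f P130 x = f P130 (pm d c b a x)"
proof -
  have "f (lift [r_ab_c_d, r_ab_d_c, r_cd_a_b, r_cd_b_a]) x = f (lift [r_cd_b_a, r_cd_a_b, r_ab_d_c, r_ab_c_d]) (pm d c b a x)"
    by (rule neutral_lift) (auto simp: pm_def dist')
  moreover have "f (lift [r_cd_b_a, r_cd_a_b, r_ab_d_c, r_ab_c_d]) = f (lift [r_ab_c_d, r_ab_d_c, r_cd_a_b, r_cd_b_a])"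
  proof -
    have "f (lift [r_cd_b_a, r_cd_a_b, r_ab_d_c, r_ab_c_d]) = f (lift (map (nth [r_cd_b_a, r_cd_a_b, r_ab_d_c, r_ab_c_d]) [3,2,1,0]))" by (rule anon_lift) auto
    then show ?thesis by simp
  qed
  ultimately show ?thesis unfolding P130_def P130_def by simp
qed

lemma link8_a: "f P130 a = f P130 d" using link8[of a] dist' by (simp add: pm_def)

lemma link8_b: "f P130 b = f P130 c" using link8[of b] dist' by (simp add: pm_def)

lemma link8_c: "f P130 c = f P130 b" using link8[of c] dist' by (simp add: pm_def)

lemma link8_d: "f P130 d = f P130 a" using link8[of d] dist' by (simp add: pm_def)

lemma link9: "f P266 x = f P266 (pm b a c d x)"
proof -
  have "f (lift [r_ab_c_d, r_ac_bd, r_bc_ad, r_cd_ab]) x = f (lift [r_ab_c_d, r_bc_ad, r_ac_bd, r_cd_ab]) (pm b a c d x)"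
    by (rule neutral_lift) (auto simp: pm_def dist')
  moreover have "f (lift [r_ab_c_d, r_bc_ad, r_ac_bd, r_cd_ab]) = f (lift [r_ab_c_d, r_ac_bd, r_bc_ad, r_cd_ab])"
  proof -
    have "f (lift [r_ab_c_d, r_bc_ad, r_ac_bd, r_cd_ab]) = f (lift (map (nth [r_ab_c_d, r_bc_ad, r_ac_bd, r_cd_ab]) [0,2,1,3]))" by (rule anon_lift) auto
    then show ?thesis by simp
  qed
  ultimately show ?thesis unfolding P266_def P266_def by simp
qed

lemma link9_a: "f P266 a = f P266 b" using link9[of a] dist' by (simp add: pm_def)

lemma link9_b: "f P266 b = f P266 a" using link9[of b] dist' by (simp add: pm_def)

lemma link9_c: "f P266 c = f P266 c" using link9[of c] dist' by (simp add: pm_def)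

lemma link9_d: "f P266 d = f P266 d" using link9[of d] dist' by (simp add: pm_def)

lemma link10: "f P267 x = f P267 (pm d b c a x)"
proof -
  have "f (lift [r_ab_c_d, r_ac_bd, r_bd_c_a, r_cd_ab]) x = f (lift [r_bd_c_a, r_cd_ab, r_ab_c_d, r_ac_bd]) (pm d b c a x)"
    by (rule neutral_lift) (auto simp: pm_def dist')
  moreover have "f (lift [r_bd_c_a, r_cd_ab, r_ab_c_d, r_ac_bd]) = f (lift [r_ab_c_d, r_ac_bd, r_bd_c_a, r_cd_ab])"
  proof -
    have "f (lift [r_bd_c_a, r_cd_ab, r_ab_c_d, r_ac_bd]) = f (lift (map (nth [r_bd_c_a, r_cd_ab, r_ab_c_d, r_ac_bd]) [2,3,0,1]))" by (rule anon_lift) auto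
    then show ?thesis by simp
  qed
  ultimately show ?thesis unfolding P267_def P267_def by simp
qed

lemma link10_a: "f P267 a = f P267 d" using link10[of a] dist' by (simp add: pm_def)

lemma link10_b: "f P267 b = f P267 b" using link10[of b] dist' by (simp add: pm_def)

lemma link10_c: "f P267 c = f P267 c" using link10[of c] dist' by (simp add: pm_def)

lemma link10_d: "f P267 d = f P267 a" using link10[of d] dist' by (simp add: pm_def)

lemma link11: "f P270 x = f P270 (pm d c b a x)"
proof -
  have "f (lift [r_ab_c_d, r_ac_bd, r_bd_ac, r_cd_b_a]) x = f (lift [r_cd_b_a, r_bd_ac, r_ac_bd, r_ab_c_d]) (pm d c b a x)"
    by (rule neutral_lift) (auto simp: pm_def dist')
  moreover have "f (lift [r_cd_b_a, r_bd_ac, r_ac_bd, r_ab_c_d]) = f (lift [r_ab_c_d, r_ac_bd, r_bd_ac, r_cd_b_a])"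
  proof -
    have "f (lift [r_cd_b_a, r_bd_ac, r_ac_bd, r_ab_c_d]) = f (lift (map (nth [r_cd_b_a, r_bd_ac, r_ac_bd, r_ab_c_d]) [3,2,1,0]))" by (rule anon_lift) auto
    then show ?thesis by simp
  qed
  ultimately show ?thesis unfolding P270_def P270_def by simp
qed

lemma link11_a: "f P270 a = f P270 d" using link11[of a] dist' by (simp add: pm_def)

lemma link11_b: "f P270 b = f P270 c" using link11[of b] dist' by (simp add: pm_def)

lemma link11_c: "f P270 c = f P270 b" using link11[of c] dist' by (simp add: pm_def)

lemma link11_d: "f P270 d = f P270 a" using link11[of d] dist' by (simp add: pm_def)

lemma link12: "f Q0 x = f P73 (pm a b c d x)"
proof -
  have "f (lift [r_ab_c_d, r_ab_c_d, r_ad_b_c, r_bd_ac]) x = f (lift [r_ab_c_d, r_ab_c_d, r_ad_b_c, r_bd_ac]) (pm a b c d x)"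
    by (rule neutral_lift) (auto simp: pm_def dist')
  moreover have "f (lift [r_ab_c_d, r_ab_c_d, r_ad_b_c, r_bd_ac]) = f (lift [r_ab_c_d, r_ab_c_d, r_ad_b_c, r_bd_ac])"
  proof -
    have "f (lift [r_ab_c_d, r_ab_c_d, r_ad_b_c, r_bd_ac]) = f (lift (map (nth [r_ab_c_d, r_ab_c_d, r_ad_b_c, r_bd_ac]) [0,1,2,3]))" by (rule anon_lift) auto
    then show ?thesis by simp
  qed
  ultimately show ?thesis unfolding Q0_def P73_def by simp
qed

lemma link12_a: "f Q0 a = f P73 a" using link12[of a] dist' by (simp add: pm_def)

lemma link12_b: "f Q0 b = f P73 b" using link12[of b] dist' by (simp add: pm_def)

lemma link12_c: "f Q0 c = f P73 c" using link12[of c] dist' by (simp add: pm_def)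

lemma link12_d: "f Q0 d = f P73 d" using link12[of d] dist' by (simp add: pm_def)

lemma link13: "f Q1 x = f P38 (pm a b c d x)"
proof -
  have "f (lift [r_ab_c_d, r_ab_c_d, r_ac_b_d, r_bc_ad]) x = f (lift [r_ab_c_d, r_ab_c_d, r_ac_b_d, r_bc_ad]) (pm a b c d x)"
    by (rule neutral_lift) (auto simp: pm_def dist')
  moreover have "f (lift [r_ab_c_d, r_ab_c_d, r_ac_b_d, r_bc_ad]) = f (lift [r_ab_c_d, r_ab_c_d, r_ac_b_d, r_bc_ad])"
  proof -
    have "f (lift [r_ab_c_d, r_ab_c_d, r_ac_b_d, r_bc_ad]) = f (lift (map (nth [r_ab_c_d, r_ab_c_d, r_ac_b_d, r_bc_ad]) [0,1,2,3]))" by (rule anon_lift) auto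
    then show ?thesis by simp
  qed
  ultimately show ?thesis unfolding Q1_def P38_def by simp
qed

lemma link13_a: "f Q1 a = f P38 a" using link13[of a] dist' by (simp add: pm_def)

lemma link13_b: "f Q1 b = f P38 b" using link13[of b] dist' by (simp add: pm_def)

lemma link13_c: "f Q1 c = f P38 c" using link13[of c] dist' by (simp add: pm_def)

lemma link13_d: "f Q1 d = f P38 d" using link13[of d] dist' by (simp add: pm_def)

lemma link14: "f Q2 x = f P90 (pm a b c d x)"
proof -
  have "f (lift [r_ab_c_d, r_ab_c_d, r_cd_a_b, r_cd_b_a]) x = f (lift [r_ab_c_d, r_ab_c_d, r_cd_a_b, r_cd_b_a]) (pm a b c d x)"
    by (rule neutral_lift) (auto simp: pm_def dist')
  moreover have "f (lift [r_ab_c_d, r_ab_c_d, r_cd_a_b, r_cd_b_a]) = f (lift [r_ab_c_d, r_ab_c_d, r_cd_a_b, r_cd_b_a])"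
  proof -
    have "f (lift [r_ab_c_d, r_ab_c_d, r_cd_a_b, r_cd_b_a]) = f (lift (map (nth [r_ab_c_d, r_ab_c_d, r_cd_a_b, r_cd_b_a]) [0,1,2,3]))" by (rule anon_lift) auto
    then show ?thesis by simp
  qed
  ultimately show ?thesis unfolding Q2_def P90_def by simp
qed

lemma link14_a: "f Q2 a = f P90 a" using link14[of a] dist' by (simp add: pm_def)

lemma link14_b: "f Q2 b = f P90 b" using link14[of b] dist' by (simp add: pm_def)

lemma link14_c: "f Q2 c = f P90 c" using link14[of c] dist' by (simp add: pm_def)

lemma link14_d: "f Q2 d = f P90 d" using link14[of d] dist' by (simp add: pm_def)

lemma link15: "f Q3 x = f P38 (pm b a c d x)"
proof -
  have "f (lift [r_ab_c_d, r_ab_c_d, r_ac_bd, r_bc_a_d]) x = f (lift [r_ab_c_d, r_ab_c_d, r_bc_ad, r_ac_b_d]) (pm b a c d x)"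
    by (rule neutral_lift) (auto simp: pm_def dist')
  moreover have "f (lift [r_ab_c_d, r_ab_c_d, r_bc_ad, r_ac_b_d]) = f (lift [r_ab_c_d, r_ab_c_d, r_ac_b_d, r_bc_ad])"
  proof -
    have "f (lift [r_ab_c_d, r_ab_c_d, r_bc_ad, r_ac_b_d]) = f (lift (map (nth [r_ab_c_d, r_ab_c_d, r_bc_ad, r_ac_b_d]) [0,1,3,2]))" by (rule anon_lift) auto
    then show ?thesis by simp
  qed
  ultimately show ?thesis unfolding Q3_def P38_def by simp
qed

lemma link15_a: "f Q3 a = f P38 b" using link15[of a] dist' by (simp add: pm_def)

lemma link15_b: "f Q3 b = f P38 a" using link15[of b] dist' by (simp add: pm_def)

lemma link15_c: "f Q3 c = f P38 c" using link15[of c] dist' by (simp add: pm_def)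

lemma link15_d: "f Q3 d = f P38 d" using link15[of d] dist' by (simp add: pm_def)

lemma link16: "f Q4 x = f P265 (pm a b c d x)"
proof -
  have "f (lift [r_ad_bc, r_ab_c_d, r_ac_bd, r_cd_ab]) x = f (lift [r_ad_bc, r_ab_c_d, r_ac_bd, r_cd_ab]) (pm a b c d x)"
    by (rule neutral_lift) (auto simp: pm_def dist')
  moreover have "f (lift [r_ad_bc, r_ab_c_d, r_ac_bd, r_cd_ab]) = f (lift [r_ab_c_d, r_ac_bd, r_ad_bc, r_cd_ab])"
  proof -
    have "f (lift [r_ad_bc, r_ab_c_d, r_ac_bd, r_cd_ab]) = f (lift (map (nth [r_ad_bc, r_ab_c_d, r_ac_bd, r_cd_ab]) [1,2,0,3]))" by (rule anon_lift) auto
    then show ?thesis by simp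
  qed
  ultimately show ?thesis unfolding Q4_def P265_def by simp
qed

lemma link16_a: "f Q4 a = f P265 a" using link16[of a] dist' by (simp add: pm_def)

lemma link16_b: "f Q4 b = f P265 b" using link16[of b] dist' by (simp add: pm_def)

lemma link16_c: "f Q4 c = f P265 c" using link16[of c] dist' by (simp add: pm_def)

lemma link16_d: "f Q4 d = f P265 d" using link16[of d] dist' by (simp add: pm_def)

lemma link17: "f Q5 x = f P67 (pm a b c d x)"
proof -
  have "f (lift [r_ab_c_d, r_ab_c_d, r_ac_bd, r_cd_b_a]) x = f (lift [r_ab_c_d, r_ab_c_d, r_ac_bd, r_cd_b_a]) (pm a b c d x)"
    by (rule neutral_lift) (auto simp: pm_def dist')
  moreover have "f (lift [r_ab_c_d, r_ab_c_d, r_ac_bd, r_cd_b_a]) = f (lift [r_ab_c_d, r_ab_c_d, r_ac_bd, r_cd_b_a])"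
  proof -
    have "f (lift [r_ab_c_d, r_ab_c_d, r_ac_bd, r_cd_b_a]) = f (lift (map (nth [r_ab_c_d, r_ab_c_d, r_ac_bd, r_cd_b_a]) [0,1,2,3]))" by (rule anon_lift) auto
    then show ?thesis by simp
  qed
  ultimately show ?thesis unfolding Q5_def P67_def by simp
qed

lemma link17_a: "f Q5 a = f P67 a" using link17[of a] dist' by (simp add: pm_def)

lemma link17_b: "f Q5 b = f P67 b" using link17[of b] dist' by (simp add: pm_def)

lemma link17_c: "f Q5 c = f P67 c" using link17[of c] dist' by (simp add: pm_def)

lemma link17_d: "f Q5 d = f P67 d" using link17[of d] dist' by (simp add: pm_def)

lemma link18: "f Q6 x = f P230 (pm a c d b x)"
proof -
  have "f (lift [r_ac_bd, r_ab_c_d, r_ad_b_c, r_bd_ac]) x = f (lift [r_ad_bc, r_ac_d_b, r_ab_c_d, r_bc_ad]) (pm a c d b x)"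
    by (rule neutral_lift) (auto simp: pm_def dist')
  moreover have "f (lift [r_ad_bc, r_ac_d_b, r_ab_c_d, r_bc_ad]) = f (lift [r_ab_c_d, r_ac_d_b, r_ad_bc, r_bc_ad])"
  proof -
    have "f (lift [r_ad_bc, r_ac_d_b, r_ab_c_d, r_bc_ad]) = f (lift (map (nth [r_ad_bc, r_ac_d_b, r_ab_c_d, r_bc_ad]) [2,1,0,3]))" by (rule anon_lift) auto
    then show ?thesis by simp
  qed
  ultimately show ?thesis unfolding Q6_def P230_def by simp
qed

lemma link18_a: "f Q6 a = f P230 a" using link18[of a] dist' by (simp add: pm_def)

lemma link18_b: "f Q6 b = f P230 c" using link18[of b] dist' by (simp add: pm_def)

lemma link18_c: "f Q6 c = f P230 d" using link18[of c] dist' by (simp add: pm_def)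

lemma link18_d: "f Q6 d = f P230 b" using link18[of d] dist' by (simp add: pm_def)

lemma link19: "f Q7 x = f P85 (pm a b c d x)"
proof -
  have "f (lift [r_ab_c_d, r_ab_c_d, r_ad_bc, r_bd_ac]) x = f (lift [r_ab_c_d, r_ab_c_d, r_ad_bc, r_bd_ac]) (pm a b c d x)"
    by (rule neutral_lift) (auto simp: pm_def dist')
  moreover have "f (lift [r_ab_c_d, r_ab_c_d, r_ad_bc, r_bd_ac]) = f (lift [r_ab_c_d, r_ab_c_d, r_ad_bc, r_bd_ac])"
  proof -
    have "f (lift [r_ab_c_d, r_ab_c_d, r_ad_bc, r_bd_ac]) = f (lift (map (nth [r_ab_c_d, r_ab_c_d, r_ad_bc, r_bd_ac]) [0,1,2,3]))" by (rule anon_lift) auto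
    then show ?thesis by simp
  qed
  ultimately show ?thesis unfolding Q7_def P85_def by simp
qed

lemma link19_a: "f Q7 a = f P85 a" using link19[of a] dist' by (simp add: pm_def)

lemma link19_b: "f Q7 b = f P85 b" using link19[of b] dist' by (simp add: pm_def)

lemma link19_c: "f Q7 c = f P85 c" using link19[of c] dist' by (simp add: pm_def)

lemma link19_d: "f Q7 d = f P85 d" using link19[of d] dist' by (simp add: pm_def)

lemma link20: "f Q8 x = f P90 (pm c d a b x)"
proof -
  have "f (lift [r_ab_c_d, r_ab_d_c, r_cd_a_b, r_cd_a_b]) x = f (lift [r_cd_a_b, r_cd_b_a, r_ab_c_d, r_ab_c_d]) (pm c d a b x)"
    by (rule neutral_lift) (auto simp: pm_def dist')
  moreover have "f (lift [r_cd_a_b, r_cd_b_a, r_ab_c_d, r_ab_c_d]) = f (lift [r_ab_c_d, r_ab_c_d, r_cd_a_b, r_cd_b_a])"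
  proof -
    have "f (lift [r_cd_a_b, r_cd_b_a, r_ab_c_d, r_ab_c_d]) = f (lift (map (nth [r_cd_a_b, r_cd_b_a, r_ab_c_d, r_ab_c_d]) [2,3,0,1]))" by (rule anon_lift) auto
    then show ?thesis by simp
  qed
  ultimately show ?thesis unfolding Q8_def P90_def by simp
qed

lemma link20_a: "f Q8 a = f P90 c" using link20[of a] dist' by (simp add: pm_def)

lemma link20_b: "f Q8 b = f P90 d" using link20[of b] dist' by (simp add: pm_def)

lemma link20_c: "f Q8 c = f P90 a" using link20[of c] dist' by (simp add: pm_def)

lemma link20_d: "f Q8 d = f P90 b" using link20[of d] dist' by (simp add: pm_def)

lemma link21: "f Q9 x = f P270 (pm b a c d x)"
proof -
  have "f (lift [r_ab_c_d, r_cd_a_b, r_ad_bc, r_bc_ad]) x = f (lift [r_ab_c_d, r_cd_b_a, r_bd_ac, r_ac_bd]) (pm b a c d x)"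
    by (rule neutral_lift) (auto simp: pm_def dist')
  moreover have "f (lift [r_ab_c_d, r_cd_b_a, r_bd_ac, r_ac_bd]) = f (lift [r_ab_c_d, r_ac_bd, r_bd_ac, r_cd_b_a])"
  proof -
    have "f (lift [r_ab_c_d, r_cd_b_a, r_bd_ac, r_ac_bd]) = f (lift (map (nth [r_ab_c_d, r_cd_b_a, r_bd_ac, r_ac_bd]) [0,3,2,1]))" by (rule anon_lift) auto
    then show ?thesis by simp
  qed
  ultimately show ?thesis unfolding Q9_def P270_def by simp
qed

lemma link21_a: "f Q9 a = f P270 b" using link21[of a] dist' by (simp add: pm_def)

lemma link21_b: "f Q9 b = f P270 a" using link21[of b] dist' by (simp add: pm_def)

lemma link21_c: "f Q9 c = f P270 c" using link21[of c] dist' by (simp add: pm_def)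

lemma link21_d: "f Q9 d = f P270 d" using link21[of d] dist' by (simp add: pm_def)

lemma link22: "f Q10 x = f P290 (pm a d b c x)"
proof -
  have "f (lift [r_ab_cd, r_ac_bd, r_ad_bc, r_cd_ab]) x = f (lift [r_ad_bc, r_ab_cd, r_ac_bd, r_bc_ad]) (pm a d b c x)"
    by (rule neutral_lift) (auto simp: pm_def dist')
  moreover have "f (lift [r_ad_bc, r_ab_cd, r_ac_bd, r_bc_ad]) = f (lift [r_ab_cd, r_ac_bd, r_ad_bc, r_bc_ad])"
  proof -
    have "f (lift [r_ad_bc, r_ab_cd, r_ac_bd, r_bc_ad]) = f (lift (map (nth [r_ad_bc, r_ab_cd, r_ac_bd, r_bc_ad]) [1,2,0,3]))" by (rule anon_lift) auto
    then show ?thesis by simp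
  qed
  ultimately show ?thesis unfolding Q10_def P290_def by simp
qed

lemma link22_a: "f Q10 a = f P290 a" using link22[of a] dist' by (simp add: pm_def)

lemma link22_b: "f Q10 b = f P290 d" using link22[of b] dist' by (simp add: pm_def)

lemma link22_c: "f Q10 c = f P290 b" using link22[of c] dist' by (simp add: pm_def)

lemma link22_d: "f Q10 d = f P290 c" using link22[of d] dist' by (simp add: pm_def)

lemma link23: "f Q11 x = f P290 (pm b c a d x)"
proof -
  have "f (lift [r_ab_cd, r_ac_bd, r_bc_ad, r_cd_ab]) x = f (lift [r_bc_ad, r_ab_cd, r_ac_bd, r_ad_bc]) (pm b c a d x)"
    by (rule neutral_lift) (auto simp: pm_def dist')
  moreover have "f (lift [r_bc_ad, r_ab_cd, r_ac_bd, r_ad_bc]) = f (lift [r_ab_cd, r_ac_bd, r_ad_bc, r_bc_ad])"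
  proof -
    have "f (lift [r_bc_ad, r_ab_cd, r_ac_bd, r_ad_bc]) = f (lift (map (nth [r_bc_ad, r_ab_cd, r_ac_bd, r_ad_bc]) [1,2,3,0]))" by (rule anon_lift) auto
    then show ?thesis by simp
  qed
  ultimately show ?thesis unfolding Q11_def P290_def by simp
qed

lemma link23_a: "f Q11 a = f P290 b" using link23[of a] dist' by (simp add: pm_def)

lemma link23_b: "f Q11 b = f P290 c" using link23[of b] dist' by (simp add: pm_def)

lemma link23_c: "f Q11 c = f P290 a" using link23[of c] dist' by (simp add: pm_def)

lemma link23_d: "f Q11 d = f P290 d" using link23[of d] dist' by (simp add: pm_def)

lemma link24: "f Q12 x = f P267 (pm b a c d x)"
proof -
  have "f (lift [r_ab_c_d, r_ad_c_b, r_bc_ad, r_cd_ab]) x = f (lift [r_ab_c_d, r_bd_c_a, r_ac_bd, r_cd_ab]) (pm b a c d x)"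
    by (rule neutral_lift) (auto simp: pm_def dist')
  moreover have "f (lift [r_ab_c_d, r_bd_c_a, r_ac_bd, r_cd_ab]) = f (lift [r_ab_c_d, r_ac_bd, r_bd_c_a, r_cd_ab])"
  proof -
    have "f (lift [r_ab_c_d, r_bd_c_a, r_ac_bd, r_cd_ab]) = f (lift (map (nth [r_ab_c_d, r_bd_c_a, r_ac_bd, r_cd_ab]) [0,2,1,3]))" by (rule anon_lift) auto
    then show ?thesis by simp
  qed
  ultimately show ?thesis unfolding Q12_def P267_def by simp
qed

lemma link24_a: "f Q12 a = f P267 b" using link24[of a] dist' by (simp add: pm_def)

lemma link24_b: "f Q12 b = f P267 a" using link24[of b] dist' by (simp add: pm_def)

lemma link24_c: "f Q12 c = f P267 c" using link24[of c] dist' by (simp add: pm_def)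

lemma link24_d: "f Q12 d = f P267 d" using link24[of d] dist' by (simp add: pm_def)

lemma sp0: "\<not> ((\<forall>x\<in>{a,b,c,d}. U r_ac_b_d x (f P41) \<le> U r_ac_b_d x (f Q0)) \<and> (\<exists>x\<in>{a,b,c,d}. U r_ac_b_d x (f P41) < U r_ac_b_d x (f Q0)))"
  using sp_lift[of "[r_ab_c_d, r_ab_c_d, r_ac_b_d, r_bd_ac]" 2 r_ad_b_c] unfolding P41_def Q0_def by simp

lemmas sp0_s = sp0[unfolded U_expand, simplified]

lemma sp1: "\<not> ((\<forall>x\<in>{a,b,c,d}. U r_bd_ac x (f P41) \<le> U r_bd_ac x (f Q1)) \<and> (\<exists>x\<in>{a,b,c,d}. U r_bd_ac x (f P41) < U r_bd_ac x (f Q1)))"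
  using sp_lift[of "[r_ab_c_d, r_ab_c_d, r_ac_b_d, r_bd_ac]" 3 r_bc_ad] unfolding P41_def Q1_def by simp

lemmas sp1_s = sp1[unfolded U_expand, simplified]

lemma sp2: "\<not> ((\<forall>x\<in>{a,b,c,d}. U r_ac_bd x (f P67) \<le> U r_ac_bd x (f Q2)) \<and> (\<exists>x\<in>{a,b,c,d}. U r_ac_bd x (f P67) < U r_ac_bd x (f Q2)))"
  using sp_lift[of "[r_ab_c_d, r_ab_c_d, r_ac_bd, r_cd_b_a]" 2 r_cd_a_b] unfolding P67_def Q2_def by simp

lemmas sp2_s = sp2[unfolded U_expand, simplified]

lemma sp3: "\<not> ((\<forall>x\<in>{a,b,c,d}. U r_cd_b_a x (f P67) \<le> U r_cd_b_a x (f Q3)) \<and> (\<exists>x\<in>{a,b,c,d}. U r_cd_b_a x (f P67) < U r_cd_b_a x (f Q3)))"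
  using sp_lift[of "[r_ab_c_d, r_ab_c_d, r_ac_bd, r_cd_b_a]" 3 r_bc_a_d] unfolding P67_def Q3_def by simp

lemmas sp3_s = sp3[unfolded U_expand, simplified]

lemma sp4: "\<not> ((\<forall>x\<in>{a,b,c,d}. U r_ab_c_d x (f P68) \<le> U r_ab_c_d x (f Q4)) \<and> (\<exists>x\<in>{a,b,c,d}. U r_ab_c_d x (f P68) < U r_ab_c_d x (f Q4)))"
  using sp_lift[of "[r_ab_c_d, r_ab_c_d, r_ac_bd, r_cd_ab]" 0 r_ad_bc] unfolding P68_def Q4_def by simp

lemmas sp4_s = sp4[unfolded U_expand, simplified]

lemma sp5: "\<not> ((\<forall>x\<in>{a,b,c,d}. U r_cd_ab x (f P68) \<le> U r_cd_ab x (f Q5)) \<and> (\<exists>x\<in>{a,b,c,d}. U r_cd_ab x (f P68) < U r_cd_ab x (f Q5)))"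
  using sp_lift[of "[r_ab_c_d, r_ab_c_d, r_ac_bd, r_cd_ab]" 3 r_cd_b_a] unfolding P68_def Q5_def by simp

lemmas sp5_s = sp5[unfolded U_expand, simplified]

lemma sp6: "\<not> ((\<forall>x\<in>{a,b,c,d}. U r_ab_c_d x (f P73) \<le> U r_ab_c_d x (f Q6)) \<and> (\<exists>x\<in>{a,b,c,d}. U r_ab_c_d x (f P73) < U r_ab_c_d x (f Q6)))"
  using sp_lift[of "[r_ab_c_d, r_ab_c_d, r_ad_b_c, r_bd_ac]" 0 r_ac_bd] unfolding P73_def Q6_def by simp

lemmas sp6_s = sp6[unfolded U_expand, simplified]

lemma sp7: "\<not> ((\<forall>x\<in>{a,b,c,d}. U r_ad_b_c x (f P73) \<le> U r_ad_b_c x (f Q7)) \<and> (\<exists>x\<in>{a,b,c,d}. U r_ad_b_c x (f P73) < U r_ad_b_c x (f Q7)))"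
  using sp_lift[of "[r_ab_c_d, r_ab_c_d, r_ad_b_c, r_bd_ac]" 2 r_ad_bc] unfolding P73_def Q7_def by simp

lemmas sp7_s = sp7[unfolded U_expand, simplified]

lemma sp8: "\<not> ((\<forall>x\<in>{a,b,c,d}. U r_cd_b_a x (f P130) \<le> U r_cd_b_a x (f Q8)) \<and> (\<exists>x\<in>{a,b,c,d}. U r_cd_b_a x (f P130) < U r_cd_b_a x (f Q8)))"
  using sp_lift[of "[r_ab_c_d, r_ab_d_c, r_cd_a_b, r_cd_b_a]" 3 r_cd_a_b] unfolding P130_def Q8_def by simp

lemmas sp8_s = sp8[unfolded U_expand, simplified]

lemma sp9: "\<not> ((\<forall>x\<in>{a,b,c,d}. U r_ac_d_b x (f P230) \<le> U r_ac_d_b x (f Q9)) \<and> (\<exists>x\<in>{a,b,c,d}. U r_ac_d_b x (f P230) < U r_ac_d_b x (f Q9)))"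
  using sp_lift[of "[r_ab_c_d, r_ac_d_b, r_ad_bc, r_bc_ad]" 1 r_cd_a_b] unfolding P230_def Q9_def by simp

lemmas sp9_s = sp9[unfolded U_expand, simplified]

lemma sp10: "\<not> ((\<forall>x\<in>{a,b,c,d}. U r_ab_c_d x (f P265) \<le> U r_ab_c_d x (f Q10)) \<and> (\<exists>x\<in>{a,b,c,d}. U r_ab_c_d x (f P265) < U r_ab_c_d x (f Q10)))"
  using sp_lift[of "[r_ab_c_d, r_ac_bd, r_ad_bc, r_cd_ab]" 0 r_ab_cd] unfolding P265_def Q10_def by simp

lemmas sp10_s = sp10[unfolded U_expand, simplified]

lemma sp11: "\<not> ((\<forall>x\<in>{a,b,c,d}. U r_ab_c_d x (f P266) \<le> U r_ab_c_d x (f Q11)) \<and> (\<exists>x\<in>{a,b,c,d}. U r_ab_c_d x (f P266) < U r_ab_c_d x (f Q11)))"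
  using sp_lift[of "[r_ab_c_d, r_ac_bd, r_bc_ad, r_cd_ab]" 0 r_ab_cd] unfolding P266_def Q11_def by simp

lemmas sp11_s = sp11[unfolded U_expand, simplified]

lemma sp12: "\<not> ((\<forall>x\<in>{a,b,c,d}. U r_ac_bd x (f P266) \<le> U r_ac_bd x (f Q12)) \<and> (\<exists>x\<in>{a,b,c,d}. U r_ac_bd x (f P266) < U r_ac_bd x (f Q12)))"
  using sp_lift[of "[r_ab_c_d, r_ac_bd, r_bc_ad, r_cd_ab]" 1 r_ad_c_b] unfolding P266_def Q12_def by simp

lemmas sp12_s = sp12[unfolded U_expand, simplified]

lemma eff_P85_0: "f P85 c = 0"
proof (rule ccontr)
  assume H: "\<not> (f P85 c = 0)"
  have pos: "f P85 c > 0" using H lot_P85 by auto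
  show False
    by (rule eff_lift[of "[r_ab_c_d, r_ab_c_d, r_ad_bc, r_bd_ac]" "0" "1" "-1" "0"]) (use pos[unfolded P85_def] in \<open>simp_all add: U_def dl_def dist'\<close>)
qed

lemma eff_P90_0: "f P90 d = 0"
proof (rule ccontr)
  assume H: "\<not> (f P90 d = 0)"
  have pos: "f P90 d > 0" using H lot_P90 by auto
  show False
    by (rule eff_lift[of "[r_ab_c_d, r_ab_c_d, r_cd_a_b, r_cd_b_a]" "0" "0" "1" "-1"]) (use pos[unfolded P90_def] in \<open>simp_all add: U_def dl_def dist'\<close>)
qed

lemma eff_P267_0: "f P267 a = 0 \<or> f P267 d = 0"
proof (rule ccontr)
  assume H: "\<not> (f P267 a = 0 \<or> f P267 d = 0)"
  have pos: "f P267 a > 0" "f P267 d > 0" using H lot_P267 by auto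
  show False
    by (rule eff_lift[of "[r_ab_c_d, r_ac_bd, r_bd_c_a, r_cd_ab]" "-3" "3" "3" "-3"]) (use pos[unfolded P267_def] in \<open>simp_all add: U_def dl_def dist'\<close>)
qed

lemma eff_P270_0: "f P270 a = 0 \<or> f P270 d = 0"
proof (rule ccontr)
  assume H: "\<not> (f P270 a = 0 \<or> f P270 d = 0)"
  have pos: "f P270 a > 0" "f P270 d > 0" using H lot_P270 by auto
  show False
    by (rule eff_lift[of "[r_ab_c_d, r_ac_bd, r_bd_ac, r_cd_b_a]" "-3" "3" "3" "-3"]) (use pos[unfolded P270_def] in \<open>simp_all add: U_def dl_def dist'\<close>)
qed

lemma eff_P290_0: "f P290 d = 0"
proof (rule ccontr)
  assume H: "\<not> (f P290 d = 0)"
  have pos: "f P290 d > 0" using H lot_P290 by auto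
  show False
    by (rule eff_lift[of "[r_ab_cd, r_ac_bd, r_ad_bc, r_bc_ad]" "1" "0" "0" "-1"]) (use pos[unfolded P290_def] in \<open>simp_all add: U_def dl_def dist'\<close>)
qed

lemma contradiction: False
  using lot_P38 lot_P41 lot_P67 lot_P68 lot_P73 lot_P85 lot_P90 lot_P130 lot_P230 lot_P265 lot_P266 lot_P267 lot_P270 lot_P290 link0_a link0_b link0_c link0_d link1_a link1_b link1_c link1_d link2_a link2_b link2_c link2_d link3_a link3_b link3_c link3_d link4_a link4_b link4_c link4_d link5_a link5_b link5_c link5_d link6_a link6_b link6_c link6_d link7_a link7_b link7_c link7_d link8_a link8_b link8_c link8_d link9_a link9_b link9_c link9_d link10_a link10_b link10_c link10_d link11_a link11_b link11_c link11_d link12_a link12_b link12_c link12_d link13_a link13_b link13_c link13_d link14_a link14_b link14_c link14_d link15_a link15_b link15_c link15_d link16_a link16_b link16_c link16_d link17_a link17_b link17_c link17_d link18_a link18_b link18_c link18_d link19_a link19_b link19_c link19_d link20_a link20_b link20_c link20_d link21_a link21_b link21_c link21_d link22_a link22_b link22_c link22_d link23_a link23_b link23_c link23_d link24_a link24_b link24_c link24_d sp0_s sp1_s sp2_s sp3_s sp4_s sp5_s sp6_s sp7_s sp8_s sp9_s sp10_s sp11_s sp12_s eff_P85_0 eff_P90_0 eff_P267_0 eff_P270_0 eff_P290_0 by (smt (z3))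

end


lemma four_elems:
  assumes "finite A" "card A \<ge> 4"
  obtains a b c d where "a \<in> A" "b \<in> A" "c \<in> A" "d \<in> A"
    "a \<noteq> b" "a \<noteq> c" "a \<noteq> d" "b \<noteq> c" "b \<noteq> d" "c \<noteq> d"
proof -
  obtain B where B: "B \<subseteq> A" "card B = 4" using obtain_subset_with_card_n[OF assms(2)] by blast
  have "card B = Suc 3" using B by simp
  then have "\<exists>a B'. B = insert a B' \<and> a \<notin> B' \<and> card B' = 3" unfolding card_Suc_eq by blast
  then obtain a B' where a: "B = insert a B'" "a \<notin> B'" "card B' = 3" by blast
  then obtain x y z where xyz: "B' = {x,y,z}" "x \<noteq> y" "y \<noteq> z" "x \<noteq> z" by (auto simp: card_3_iff)
  show ?thesis using that[of a x y z] a xyz B by auto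
qed

theorem theorem3p1:
  fixes A :: "'a set" and n :: nat
  assumes "finite A" and "card A \<ge> 4" and "n \<ge> 4"
  shows "\<not> (\<exists>f. SDS A n f \<and> anonymous A n f \<and> neutral A n f \<and>
                efficient A n f \<and> strategyproof A n f)"
proof
  assume "\<exists>f. SDS A n f \<and> anonymous A n f \<and> neutral A n f \<and> efficient A n f \<and> strategyproof A n f"
  then obtain f where f: "SDS A n f" "anonymous A n f" "neutral A n f" "efficient A n f" "strategyproof A n f"
    by blast
  obtain a b c d where abcd: "a \<in> A" "b \<in> A" "c \<in> A" "d \<in> A"
    "a \<noteq> b" "a \<noteq> c" "a \<noteq> d" "b \<noteq> c" "b \<noteq> d" "c \<noteq> d"
    using four_elems[OF assms(1,2)] by blast
  interpret ctx A n f a b c d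
    by (unfold_locales) (use assms f abcd in auto)
  show False by (rule contradiction)
qed


end
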